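(* Let $\Theta$ be a causal theory over $\mathfrak L$, let $\phi,\psi\in\mathfrak L$, and let $\Theta'=\Theta\cup\{\phi\triangleright\psi\}$. Write $\Box$ for the modal operator and $\vdash_\Box$ for derivability in $\mathbf S_\Theta$ (language $\mathcal L_\Box$), and $\Box'$, $\vdash_{\Box'}$ for the corresponding operator and derivability in $\mathbf S_{\Theta'}$ (language $\mathcal L_{\Box'}$). Define $\alpha:\mathcal L_{\Box'}\to\mathcal L_\Box$ by $\alpha(a)=a$ for atoms, $\alpha$ commuting with $\neg,\wedge,\vee,\to$ (and fixing $\top,\perp$), and $\alpha(\Box' p)=(\phi\wedge\Box(\psi\to\alpha(p)))\vee\Box\alpha(p)$. Then for all $\Gamma,\Delta\subseteq\mathcal L_{\Box'}$, $\Gamma\vdash_{\Box'}\Delta$ is derivable in $\mathbf S_{\Theta'}$ if and only if $\alpha(\Gamma)\vdash_\Box\alpha(\Delta)$ is derivable in $\mathbf S_\Theta$.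
   Context: $\mathfrak L$ is a classical propositional language. A causal rule is $\phi\triangleright\psi$ with $\phi,\psi\in\mathfrak L$; a causal theory $\Theta$ is a set of causal rules. For a causal theory $\Theta$, the language $\mathcal L_\Box$ is generated by $\mathfrak L$ and a unary operator $\Box$ (associated with $\Theta$). The sequent calculus $\mathbf S_\Theta$ derives sequents $\Gamma\vdash_\Box\Delta$ (collections possibly infinite; derivations well-founded, possibly infinitely branching) via: axiom $p\vdash_\Box p$; $\perp\vdash_\Box$; $\vdash_\Box\top$; weakening and contraction on both sides; classical two-sided LK rules for $\neg,\wedge,\vee,\to$ with shared contexts; $\Box$R: if $\phi_1\triangleright\psi_1,\dots,\phi_k\triangleright\psi_k\in\Theta$ and $\psi_1,\dots,\psi_k\vdash_\Box p$ is derivable, from $\Gamma\vdash_\Box\phi_1\wedge\dots\wedge\phi_k,\Delta$ infer $\Gamma\vdash_\Box\Box p,\Delta$ (empty conjunction $=\top$); $\Box$L: letting $\{S_j\}_{j\in J}$ be all finite $S_j\subseteq\Theta$ with $\{\psi:\phi\triangleright\psi\in S_j\}\vdash_\Box p$ derivable, from $\Gamma,\{\phi:\phi\triangleright\psi\in S_j\}\vdash_\Box\Delta$ for all $j\in J$ infer $\Gamma,\Box p\vdash_\Box\Delta$; multicut: from $\Gamma\vdash_\Box p^m,\Delta$ and $\Gamma',p^n\vdash_\Box\Delta'$ ($m,n>0$) infer $\Gamma,\Gamma'\vdash_\Box\Delta,\Delta'$. The calculus $\mathbf S_{\Theta'}$ is defined identically with $\Theta'$ and a new operator $\Box'$ in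 place of $\Theta$ and $\Box$. *)

theory Defs
  imports Main
begin

text \<open>The same datatype serves both as the language with Box and the
language with Box' (the two languages are isomorphic; which calculus is meant is
determined by the causal theory that is used).\<close>

datatype 'a fm =
    Atom 'a
  | Top
  | Bot
  | Neg "'a fm"
  | Conj "'a fm" "'a fm"
  | Disj "'a fm" "'a fm"
  | Impl "'a fm" "'a fm"
  | Box "'a fm"

text \<open>The classical propositional language = the Box-free formulas.\<close>

fun boxfree :: "'a fm \<Rightarrow> bool" where
  "boxfree (Atom a) = True"
| "boxfree Top = True"
| "boxfree Bot = True"
| "boxfree (Neg A) = boxfree A"
| "boxfree (Conj A B) = (boxfree A \<and> boxfree B)"
| "boxfree (Disj A B) = (boxfree A \<and> boxfree B)"
| "boxfree (Impl A B) = (boxfree A \<and> boxfree B)"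
| "boxfree (Box A) = False"

text \<open>A causal rule phi |> psi is the pair (phi, psi); a causal theory is a set of such pairs.\<close>

type_synonym 'a causal_theory = "('a fm \<times> 'a fm) set"

definition causal_theory :: "'a causal_theory \<Rightarrow> bool" where
  "causal_theory Th \<longleftrightarrow> (\<forall>(a, b) \<in> Th. boxfree a \<and> boxfree b)"

fun conjs :: "'a fm list \<Rightarrow> 'a fm" where
  "conjs [] = Top"
| "conjs [x] = x"
| "conjs (x # y # xs) = Conj x (conjs (y # xs))"

text \<open>Sequents are pairs of (possibly infinite) sets of
formulas; with weakening and contraction present this is the standard set reading of
the collections.  The side conditions of the Box rules ("... is derivable") refer to the
derivability relation of S_Th itself; since this reference is non-monotone, the rules are
defined relative to a given relation Side, and the derivability relation of S_Th is then
characterised as a fixed point (see is_derivability below).  Derivations generated by an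
inductive definition are well-founded and may be infinitely branching (rule box_L).\<close>

inductive calc :: "'a causal_theory \<Rightarrow> ('a fm set \<Rightarrow> 'a fm set \<Rightarrow> bool)
                    \<Rightarrow> 'a fm set \<Rightarrow> 'a fm set \<Rightarrow> bool"
  for Th :: "'a causal_theory" and Side :: "'a fm set \<Rightarrow> 'a fm set \<Rightarrow> bool" where
  ax: "calc Th Side {p} {p}"
| botL: "calc Th Side {Bot} {}"
| topR: "calc Th Side {} {Top}"
| weak: "calc Th Side \<Gamma> \<Delta> \<Longrightarrow> \<Gamma> \<subseteq> \<Gamma>' \<Longrightarrow> \<Delta> \<subseteq> \<Delta>' \<Longrightarrow> calc Th Side \<Gamma>' \<Delta>'"
| negL: "calc Th Side \<Gamma> (insert A \<Delta>) \<Longrightarrow> calc Th Side (insert (Neg A) \<Gamma>) \<Delta>"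
| negR: "calc Th Side (insert A \<Gamma>) \<Delta> \<Longrightarrow> calc Th Side \<Gamma> (insert (Neg A) \<Delta>)"
| conjL: "calc Th Side (insert A (insert B \<Gamma>)) \<Delta> \<Longrightarrow> calc Th Side (insert (Conj A B) \<Gamma>) \<Delta>"
| conjR: "calc Th Side \<Gamma> (insert A \<Delta>) \<Longrightarrow> calc Th Side \<Gamma> (insert B \<Delta>)
          \<Longrightarrow> calc Th Side \<Gamma> (insert (Conj A B) \<Delta>)"
| disjL: "calc Th Side (insert A \<Gamma>) \<Delta> \<Longrightarrow> calc Th Side (insert B \<Gamma>) \<Delta>
          \<Longrightarrow> calc Th Side (insert (Disj A B) \<Gamma>) \<Delta>"
| disjR: "calc Th Side \<Gamma> (insert A (insert B \<Delta>)) \<Longrightarrow> calc Th Side \<Gamma> (insert (Disj A B) \<Delta>)"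
| implL: "calc Th Side \<Gamma> (insert A \<Delta>) \<Longrightarrow> calc Th Side (insert B \<Gamma>) \<Delta>
          \<Longrightarrow> calc Th Side (insert (Impl A B) \<Gamma>) \<Delta>"
| implR: "calc Th Side (insert A \<Gamma>) (insert B \<Delta>) \<Longrightarrow> calc Th Side \<Gamma> (insert (Impl A B) \<Delta>)"
| boxR: "set rs \<subseteq> Th \<Longrightarrow> Side (set (map snd rs)) {p}
          \<Longrightarrow> calc Th Side \<Gamma> (insert (conjs (map fst rs)) \<Delta>)
          \<Longrightarrow> calc Th Side \<Gamma> (insert (Box p) \<Delta>)"
| boxL: "(\<And>S. finite S \<Longrightarrow> S \<subseteq> Th \<Longrightarrow> Side (snd ` S) {p} \<Longrightarrow> calc Th Side (\<Gamma> \<union> fst ` S) \<Delta>)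
          \<Longrightarrow> calc Th Side (insert (Box p) \<Gamma>) \<Delta>"
| cut: "calc Th Side \<Gamma> (insert p \<Delta>) \<Longrightarrow> calc Th Side (insert p \<Gamma>') \<Delta>'
          \<Longrightarrow> calc Th Side (\<Gamma> \<union> \<Gamma>') (\<Delta> \<union> \<Delta>')"

text \<open>D is the derivability relation of S_Th: a sequent is derivable iff it has a
(well-founded) derivation in which the side conditions of the Box rules are themselves
derivable sequents.\<close>

definition is_derivability :: "'a causal_theory \<Rightarrow> ('a fm set \<Rightarrow> 'a fm set \<Rightarrow> bool) \<Rightarrow> bool" where
  "is_derivability Th D \<longleftrightarrow> D = calc Th D"

fun alpha :: "'a fm \<Rightarrow> 'a fm \<Rightarrow> 'a fm \<Rightarrow> 'a fm" where
  "alpha \<phi> \<psi> (Atom a) = Atom a"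
| "alpha \<phi> \<psi> Top = Top"
| "alpha \<phi> \<psi> Bot = Bot"
| "alpha \<phi> \<psi> (Neg A) = Neg (alpha \<phi> \<psi> A)"
| "alpha \<phi> \<psi> (Conj A B) = Conj (alpha \<phi> \<psi> A) (alpha \<phi> \<psi> B)"
| "alpha \<phi> \<psi> (Disj A B) = Disj (alpha \<phi> \<psi> A) (alpha \<phi> \<psi> B)"
| "alpha \<phi> \<psi> (Impl A B) = Impl (alpha \<phi> \<psi> A) (alpha \<phi> \<psi> B)"
| "alpha \<phi> \<psi> (Box p) =
     Disj (Conj \<phi> (Box (Impl \<psi> (alpha \<phi> \<psi> p)))) (Box (alpha \<phi> \<psi> p))"

end

theory Submission
  imports Defs
begin

inductive CF :: "'a causal_theory \<Rightarrow> ('a fm set \<Rightarrow> 'a fm set \<Rightarrow> bool)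
                    \<Rightarrow> 'a fm set \<Rightarrow> 'a fm set \<Rightarrow> bool"
  for Th :: "'a causal_theory" and Side :: "'a fm set \<Rightarrow> 'a fm set \<Rightarrow> bool" where
  Ax: "A \<in> \<Gamma> \<Longrightarrow> A \<in> \<Delta> \<Longrightarrow> CF Th Side \<Gamma> \<Delta>"
| BotL: "Bot \<in> \<Gamma> \<Longrightarrow> CF Th Side \<Gamma> \<Delta>"
| TopR: "Top \<in> \<Delta> \<Longrightarrow> CF Th Side \<Gamma> \<Delta>"
| NegL: "Neg A \<in> \<Gamma> \<Longrightarrow> CF Th Side \<Gamma> (insert A \<Delta>) \<Longrightarrow> CF Th Side \<Gamma> \<Delta>"
| NegR: "Neg A \<in> \<Delta> \<Longrightarrow> CF Th Side (insert A \<Gamma>) \<Delta> \<Longrightarrow> CF Th Side \<Gamma> \<Delta>"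
| ConjL: "Conj A B \<in> \<Gamma> \<Longrightarrow> CF Th Side (insert A (insert B \<Gamma>)) \<Delta> \<Longrightarrow> CF Th Side \<Gamma> \<Delta>"
| ConjR: "Conj A B \<in> \<Delta> \<Longrightarrow> CF Th Side \<Gamma> (insert A \<Delta>) \<Longrightarrow> CF Th Side \<Gamma> (insert B \<Delta>) \<Longrightarrow> CF Th Side \<Gamma> \<Delta>"
| DisjL: "Disj A B \<in> \<Gamma> \<Longrightarrow> CF Th Side (insert A \<Gamma>) \<Delta> \<Longrightarrow> CF Th Side (insert B \<Gamma>) \<Delta> \<Longrightarrow> CF Th Side \<Gamma> \<Delta>"
| DisjR: "Disj A B \<in> \<Delta> \<Longrightarrow> CF Th Side \<Gamma> (insert A (insert B \<Delta>)) \<Longrightarrow> CF Th Side \<Gamma> \<Delta>"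
| ImplL: "Impl A B \<in> \<Gamma> \<Longrightarrow> CF Th Side \<Gamma> (insert A \<Delta>) \<Longrightarrow> CF Th Side (insert B \<Gamma>) \<Delta> \<Longrightarrow> CF Th Side \<Gamma> \<Delta>"
| ImplR: "Impl A B \<in> \<Delta> \<Longrightarrow> CF Th Side (insert A \<Gamma>) (insert B \<Delta>) \<Longrightarrow> CF Th Side \<Gamma> \<Delta>"
| BoxR: "Box p \<in> \<Delta> \<Longrightarrow> set rs \<subseteq> Th \<Longrightarrow> Side (set (map snd rs)) {p}
          \<Longrightarrow> CF Th Side \<Gamma> (insert (conjs (map fst rs)) \<Delta>) \<Longrightarrow> CF Th Side \<Gamma> \<Delta>"
| BoxL: "Box p \<in> \<Gamma> \<Longrightarrow> (\<And>S. finite S \<Longrightarrow> S \<subseteq> Th \<Longrightarrow> Side (snd ` S) {p} \<Longrightarrow> CF Th Side (\<Gamma> \<union> fst ` S) \<Delta>)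
          \<Longrightarrow> CF Th Side \<Gamma> \<Delta>"

lemma CF_weak:
  "CF Th Side \<Gamma> \<Delta> \<Longrightarrow> \<Gamma> \<subseteq> \<Gamma>' \<Longrightarrow> \<Delta> \<subseteq> \<Delta>' \<Longrightarrow> CF Th Side \<Gamma>' \<Delta>'"
proof (induction arbitrary: \<Gamma>' \<Delta>' rule: CF.induct)
  case (Ax A \<Gamma> \<Delta>) then show ?case by (meson CF.Ax subsetD)
next
  case (BotL \<Gamma> \<Delta>) then show ?case by (meson CF.BotL subsetD)
next
  case (TopR \<Delta> \<Gamma>) then show ?case by (meson CF.TopR subsetD)
next
  case (NegL A \<Gamma> \<Delta>)
  have "CF Th Side \<Gamma>' (insert A \<Delta>')" by (rule NegL.IH[OF NegL.prems(1) insert_mono[OF NegL.prems(2)]])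
  then show ?case by (rule CF.NegL[of A, rotated]) (use NegL.hyps(1) NegL.prems in blast)
next
  case (NegR A \<Delta> \<Gamma>)
  have "CF Th Side (insert A \<Gamma>') \<Delta>'" by (rule NegR.IH[OF insert_mono[OF NegR.prems(1)] NegR.prems(2)])
  then show ?case by (rule CF.NegR[of A, rotated]) (use NegR.hyps(1) NegR.prems in blast)
next
  case (ConjL A B \<Gamma> \<Delta>)
  have "CF Th Side (insert A (insert B \<Gamma>')) \<Delta>'" by (rule ConjL.IH[OF insert_mono[OF insert_mono[OF ConjL.prems(1)]] ConjL.prems(2)])
  then show ?case by (rule CF.ConjL[of A B, rotated]) (use ConjL.hyps(1) ConjL.prems in blast)
next
  case (ConjR A B \<Delta> \<Gamma>)
  have 1: "CF Th Side \<Gamma>' (insert A \<Delta>')" by (rule ConjR.IH(1)[OF ConjR.prems(1) insert_mono[OF ConjR.prems(2)]])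
  have 2: "CF Th Side \<Gamma>' (insert B \<Delta>')" by (rule ConjR.IH(2)[OF ConjR.prems(1) insert_mono[OF ConjR.prems(2)]])
  show ?case by (rule CF.ConjR[of A B, OF _ 1 2]) (use ConjR.hyps(1) ConjR.prems in blast)
next
  case (DisjL A B \<Gamma> \<Delta>)
  have 1: "CF Th Side (insert A \<Gamma>') \<Delta>'" by (rule DisjL.IH(1)[OF insert_mono[OF DisjL.prems(1)] DisjL.prems(2)])
  have 2: "CF Th Side (insert B \<Gamma>') \<Delta>'" by (rule DisjL.IH(2)[OF insert_mono[OF DisjL.prems(1)] DisjL.prems(2)])
  show ?case by (rule CF.DisjL[of A B, OF _ 1 2]) (use DisjL.hyps(1) DisjL.prems in blast)
next
  case (DisjR A B \<Delta> \<Gamma>)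
  have "CF Th Side \<Gamma>' (insert A (insert B \<Delta>'))" by (rule DisjR.IH[OF DisjR.prems(1) insert_mono[OF insert_mono[OF DisjR.prems(2)]]])
  then show ?case by (rule CF.DisjR[of A B, rotated]) (use DisjR.hyps(1) DisjR.prems in blast)
next
  case (ImplL A B \<Gamma> \<Delta>)
  have 1: "CF Th Side \<Gamma>' (insert A \<Delta>')" by (rule ImplL.IH(1)[OF ImplL.prems(1) insert_mono[OF ImplL.prems(2)]])
  have 2: "CF Th Side (insert B \<Gamma>') \<Delta>'" by (rule ImplL.IH(2)[OF insert_mono[OF ImplL.prems(1)] ImplL.prems(2)])
  show ?case by (rule CF.ImplL[of A B, OF _ 1 2]) (use ImplL.hyps(1) ImplL.prems in blast)
next
  case (ImplR A B \<Delta> \<Gamma>)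
  have "CF Th Side (insert A \<Gamma>') (insert B \<Delta>')" by (rule ImplR.IH[OF insert_mono[OF ImplR.prems(1)] insert_mono[OF ImplR.prems(2)]])
  then show ?case by (rule CF.ImplR[of A B, rotated]) (use ImplR.hyps(1) ImplR.prems in blast)
next
  case (BoxR p \<Delta> rs \<Gamma>)
  have c: "CF Th Side \<Gamma>' (insert (conjs (map fst rs)) \<Delta>')" by (rule BoxR.IH[OF BoxR.prems(1) insert_mono[OF BoxR.prems(2)]])
  show ?case by (rule CF.BoxR[where Th=Th and Side=Side and p=p and rs=rs, OF _ BoxR.hyps(2) BoxR.hyps(3) c]) (use BoxR.hyps(1) BoxR.prems in blast)
next
  case (BoxL p \<Gamma> \<Delta>)
  show ?case
  proof (rule CF.BoxL[of p])
    show "Box p \<in> \<Gamma>'" using BoxL.hyps(1) BoxL.prems by blast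
  next
    fix S assume "finite S" "S \<subseteq> Th" "Side (snd ` S) {p}"
    then show "CF Th Side (\<Gamma>' \<union> fst ` S) \<Delta>'"
      using BoxL.IH[of S "\<Gamma>' \<union> fst ` S" \<Delta>'] BoxL.prems by blast
  qed
qed

lemma CF_calc: "CF Th Side \<Gamma> \<Delta> \<Longrightarrow> calc Th Side \<Gamma> \<Delta>"
proof (induction rule: CF.induct)
  case (Ax A \<Gamma> \<Delta>)
  then show ?case using calc.weak[OF calc.ax[of Th Side A], of \<Gamma> \<Delta>] by simp
next
  case (BotL \<Gamma> \<Delta>)
  then show ?case using calc.weak[OF calc.botL[of Th Side], of \<Gamma> \<Delta>] by simp
next
  case (TopR \<Delta> \<Gamma>)
  then show ?case using calc.weak[OF calc.topR[of Th Side], of \<Gamma> \<Delta>] by simp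
next
  case (NegL A \<Gamma> \<Delta>)
  then show ?case using calc.negL[of Th Side \<Gamma> A \<Delta>] by (simp add: insert_absorb)
next
  case (NegR A \<Delta> \<Gamma>)
  then show ?case using calc.negR[of Th Side A \<Gamma> \<Delta>] by (simp add: insert_absorb)
next
  case (ConjL A B \<Gamma> \<Delta>)
  then show ?case using calc.conjL[of Th Side A B \<Gamma> \<Delta>] by (simp add: insert_absorb)
next
  case (ConjR A B \<Delta> \<Gamma>)
  then show ?case using calc.conjR[of Th Side \<Gamma> A \<Delta> B] by (simp add: insert_absorb)
next
  case (DisjL A B \<Gamma> \<Delta>)
  then show ?case using calc.disjL[of Th Side A \<Gamma> \<Delta> B] by (simp add: insert_absorb)
next
  case (DisjR A B \<Delta> \<Gamma>)
  then show ?case using calc.disjR[of Th Side \<Gamma> A B \<Delta>] by (simp add: insert_absorb)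
next
  case (ImplL A B \<Gamma> \<Delta>)
  then show ?case using calc.implL[of Th Side \<Gamma> A \<Delta> B] by (simp add: insert_absorb)
next
  case (ImplR A B \<Delta> \<Gamma>)
  then show ?case using calc.implR[of Th Side A \<Gamma> B \<Delta>] by (simp add: insert_absorb)
next
  case (BoxR p \<Delta> rs \<Gamma>)
  then show ?case using calc.boxR[of rs Th Side p \<Gamma> \<Delta>] by (simp add: insert_absorb)
next
  case (BoxL p \<Gamma> \<Delta>)
  then show ?case using calc.boxL[of Th Side p \<Gamma> \<Delta>] by (simp add: insert_absorb)
qed

lemma CF_conjs_R: "set xs \<subseteq> \<Gamma> \<Longrightarrow> CF Th Side \<Gamma> (insert (conjs xs) \<Delta>)"
proof (induction xs arbitrary: \<Delta> rule: conjs.induct)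
  case 1 then show ?case by (auto intro: CF.TopR)
next
  case (2 x) then show ?case by (auto intro: CF.Ax)
next
  case (3 x y xs)
  have a: "CF Th Side \<Gamma> (insert x (insert (conjs (x # y # xs)) \<Delta>))"
    using 3(2) by (auto intro: CF.Ax)
  have b: "CF Th Side \<Gamma> (insert (conjs (y # xs)) (insert (conjs (x # y # xs)) \<Delta>))"
    using 3 by auto
  show ?case
    by (rule CF.ConjR[of x "conjs (y#xs)", OF _ a b]) simp
qed

lemma CF_conjs_L: "CF Th Side (set xs \<union> \<Gamma>) \<Delta> \<Longrightarrow> CF Th Side (insert (conjs xs) \<Gamma>) \<Delta>"
proof (induction xs arbitrary: \<Gamma> rule: conjs.induct)
  case 1 then show ?case by (rule CF_weak) auto
next
  case (2 x) then show ?case by auto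
next
  case (3 x y xs)
  have "CF Th Side (set (y#xs) \<union> insert x (insert (conjs (x # y # xs)) \<Gamma>)) \<Delta>"
    by (rule CF_weak[OF 3(2)]) auto
  then have "CF Th Side (insert (conjs (y#xs)) (insert x (insert (conjs (x # y # xs)) \<Gamma>))) \<Delta>"
    by (rule 3(1))
  then have "CF Th Side (insert x (insert (conjs (y#xs)) (insert (conjs (x # y # xs)) \<Gamma>))) \<Delta>"
    by (simp add: insert_commute)
  then show ?case
    by (rule CF.ConjL[of x "conjs (y#xs)", rotated]) simp
qed

fun dp :: "'a fm \<Rightarrow> nat" where
  "dp (Atom a) = 0"
| "dp Top = 0"
| "dp Bot = 0"
| "dp (Neg A) = dp A"
| "dp (Conj A B) = max (dp A) (dp B)"
| "dp (Disj A B) = max (dp A) (dp B)"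
| "dp (Impl A B) = max (dp A) (dp B)"
| "dp (Box p) = Suc (dp p)"

lemma boxfree_dp: "boxfree A \<Longrightarrow> dp A = 0"
  by (induction A) auto

lemma boxfree_conjs: "(\<forall>x\<in>set xs. boxfree x) \<Longrightarrow> boxfree (conjs xs)"
  by (induction xs rule: conjs.induct) auto

lemma ct_boxfree: "causal_theory Th \<Longrightarrow> (a, b) \<in> Th \<Longrightarrow> boxfree a \<and> boxfree b"
  unfolding causal_theory_def by blast

lemma ct_conjs: "causal_theory Th \<Longrightarrow> set rs \<subseteq> Th \<Longrightarrow> boxfree (conjs (map fst rs))"
  by (rule boxfree_conjs) (auto dest: ct_boxfree)

definition cutrel :: "('a fm \<times> 'a fm) set" where
  "cutrel = inv_image (less_than <*lex*> less_than) (\<lambda>C. (dp C, size C))"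

lemma wf_cutrel: "wf cutrel"
  unfolding cutrel_def by auto

lemma cutrel_sub: "dp A \<le> dp C \<Longrightarrow> size A < size C \<Longrightarrow> (A, C) \<in> cutrel"
  unfolding cutrel_def by auto

lemma cutrel_dp: "dp A < dp C \<Longrightarrow> (A, C) \<in> cutrel"
  unfolding cutrel_def by auto

fun RD :: "'a causal_theory \<Rightarrow> ('a fm set \<Rightarrow> 'a fm set \<Rightarrow> bool) \<Rightarrow> 'a fm \<Rightarrow> 'a fm set \<Rightarrow> 'a fm set \<Rightarrow> bool" where
  "RD Th Side (Neg A) \<Gamma> \<Delta> = CF Th Side (insert A \<Gamma>) \<Delta>"
| "RD Th Side (Conj A B) \<Gamma> \<Delta> = (CF Th Side \<Gamma> (insert A \<Delta>) \<and> CF Th Side \<Gamma> (insert B \<Delta>))"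
| "RD Th Side (Disj A B) \<Gamma> \<Delta> = CF Th Side \<Gamma> (insert A (insert B \<Delta>))"
| "RD Th Side (Impl A B) \<Gamma> \<Delta> = CF Th Side (insert A \<Gamma>) (insert B \<Delta>)"
| "RD Th Side (Box p) \<Gamma> \<Delta> = (\<exists>rs. set rs \<subseteq> Th \<and> Side (set (map snd rs)) {p} \<and> CF Th Side \<Gamma> (insert (conjs (map fst rs)) \<Delta>))"
| "RD Th Side Top \<Gamma> \<Delta> = True"
| "RD Th Side (Atom a) \<Gamma> \<Delta> = False"
| "RD Th Side Bot \<Gamma> \<Delta> = False"

lemma RD_mono: "RD Th Side C \<Gamma> \<Delta> \<Longrightarrow> \<Gamma> \<subseteq> \<Gamma>' \<Longrightarrow> \<Delta> \<subseteq> \<Delta>' \<Longrightarrow> RD Th Side C \<Gamma>' \<Delta>'"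
proof (cases C)
  case (Box p)
  assume "RD Th Side C \<Gamma> \<Delta>" "\<Gamma> \<subseteq> \<Gamma>'" "\<Delta> \<subseteq> \<Delta>'"
  then show ?thesis using Box by (auto intro: CF_weak)
qed (auto intro: CF_weak)

lemma RD_close: "RD Th Side C \<Gamma> \<Delta> \<Longrightarrow> C \<in> \<Delta> \<Longrightarrow> CF Th Side \<Gamma> \<Delta>"
proof (cases C)
  case (Box p)
  assume "RD Th Side C \<Gamma> \<Delta>" "C \<in> \<Delta>"
  then obtain rs where "set rs \<subseteq> Th" "Side (set (map snd rs)) {p}" "CF Th Side \<Gamma> (insert (conjs (map fst rs)) \<Delta>)"
    using Box by auto
  then show ?thesis using Box \<open>C \<in> \<Delta>\<close> by (intro CF.BoxR[of p \<Delta> rs]) auto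
qed (auto intro: CF.NegR CF.ConjR CF.DisjR CF.ImplR CF.TopR)

lemma L2:
  assumes cutH: "\<forall>C' \<Gamma> \<Delta>. (C', C) \<in> cutrel \<longrightarrow> CF Th Side \<Gamma> (insert C' \<Delta>) \<longrightarrow> CF Th Side (insert C' \<Gamma>) \<Delta> \<longrightarrow> CF Th Side \<Gamma> \<Delta>"
    and ct: "causal_theory Th"
  shows "CF Th Side \<Gamma>2 \<Delta>2 \<Longrightarrow> \<Gamma>2 \<subseteq> insert C \<Gamma> \<Longrightarrow> \<Delta>2 \<subseteq> \<Delta> \<Longrightarrow> RD Th Side C \<Gamma> \<Delta> \<Longrightarrow> CF Th Side \<Gamma> \<Delta>"
proof (induction arbitrary: \<Gamma> \<Delta> rule: CF.induct)
  case (Ax A \<Gamma>2 \<Delta>2)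
  show ?case
  proof (cases "A \<in> \<Gamma>")
    case True then show ?thesis using Ax by (intro CF.Ax[of A]) auto
  next
    case False then have "A = C" using Ax by auto
    then show ?thesis using Ax RD_close by blast
  qed
next
  case (BotL \<Gamma>2 \<Delta>2)
  show ?case
  proof (cases "Bot \<in> \<Gamma>")
    case True then show ?thesis by (rule CF.BotL)
  next
    case False then have "C = Bot" using BotL by auto
    then show ?thesis using BotL by simp
  qed
next
  case (TopR \<Delta>2 \<Gamma>2)
  then show ?case by (intro CF.TopR) auto
next
  case (NegL A \<Gamma>2 \<Delta>2)
  have 1: "CF Th Side \<Gamma> (insert A \<Delta>)"
    by (intro NegL.IH[of \<Gamma> "insert A \<Delta>"]) (use NegL.prems in \<open>auto intro: RD_mono[OF NegL.prems(3)]\<close>)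
  show ?case
  proof (cases "Neg A \<in> \<Gamma>")
    case True then show ?thesis using 1 by (rule CF.NegL)
  next
    case False then have "C = Neg A" using NegL.hyps(1) NegL.prems(1) by auto
    then show ?thesis using NegL.prems(3) 1 cutH[rule_format, of A \<Gamma> \<Delta>] by (simp add: cutrel_sub)
  qed
next
  case (NegR A \<Delta>2 \<Gamma>2)
  have 1: "CF Th Side (insert A \<Gamma>) \<Delta>"
    by (intro NegR.IH[of "insert A \<Gamma>" \<Delta>]) (use NegR.prems in \<open>auto intro: RD_mono[OF NegR.prems(3)]\<close>)
  show ?case using NegR.hyps(1) NegR.prems(2) by (intro CF.NegR[OF _ 1]) auto
next
  case (ConjL A B \<Gamma>2 \<Delta>2)
  have 1: "CF Th Side (insert A (insert B \<Gamma>)) \<Delta>"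
    by (intro ConjL.IH[of "insert A (insert B \<Gamma>)" \<Delta>]) (use ConjL.prems in \<open>auto intro: RD_mono[OF ConjL.prems(3)]\<close>)
  show ?case
  proof (cases "Conj A B \<in> \<Gamma>")
    case True then show ?thesis using 1 by (rule CF.ConjL)
  next
    case False then have C: "C = Conj A B" using ConjL.hyps(1) ConjL.prems(1) by auto
    then have 2: "CF Th Side \<Gamma> (insert A \<Delta>)" "CF Th Side \<Gamma> (insert B \<Delta>)" using ConjL.prems(3) by auto
    have 3: "CF Th Side (insert B \<Gamma>) (insert A \<Delta>)" using 2(1) by (rule CF_weak) auto
    have 4: "CF Th Side (insert B \<Gamma>) \<Delta>"
      using cutH[rule_format, of A "insert B \<Gamma>" \<Delta>] 3 1 C by (simp add: cutrel_sub insert_commute)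
    show ?thesis using cutH[rule_format, of B \<Gamma> \<Delta>] 2(2) 4 C by (simp add: cutrel_sub)
  qed
next
  case (ConjR A B \<Delta>2 \<Gamma>2)
  have 1: "CF Th Side \<Gamma> (insert A \<Delta>)"
    by (intro ConjR.IH(1)[of \<Gamma> "insert A \<Delta>"]) (use ConjR.prems in \<open>auto intro: RD_mono[OF ConjR.prems(3)]\<close>)
  have 2: "CF Th Side \<Gamma> (insert B \<Delta>)"
    by (intro ConjR.IH(2)[of \<Gamma> "insert B \<Delta>"]) (use ConjR.prems in \<open>auto intro: RD_mono[OF ConjR.prems(3)]\<close>)
  show ?case using ConjR.hyps(1) ConjR.prems(2) by (intro CF.ConjR[OF _ 1 2]) auto
next
  case (DisjL A B \<Gamma>2 \<Delta>2)
  have 1: "CF Th Side (insert A \<Gamma>) \<Delta>"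
    by (intro DisjL.IH(1)[of "insert A \<Gamma>" \<Delta>]) (use DisjL.prems in \<open>auto intro: RD_mono[OF DisjL.prems(3)]\<close>)
  have 2: "CF Th Side (insert B \<Gamma>) \<Delta>"
    by (intro DisjL.IH(2)[of "insert B \<Gamma>" \<Delta>]) (use DisjL.prems in \<open>auto intro: RD_mono[OF DisjL.prems(3)]\<close>)
  show ?case
  proof (cases "Disj A B \<in> \<Gamma>")
    case True then show ?thesis using 1 2 by (rule CF.DisjL)
  next
    case False then have C: "C = Disj A B" using DisjL.hyps(1) DisjL.prems(1) by auto
    then have 3: "CF Th Side \<Gamma> (insert A (insert B \<Delta>))" using DisjL.prems(3) by auto
    have 4: "CF Th Side (insert A \<Gamma>) (insert B \<Delta>)" using 1 by (rule CF_weak) auto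
    have 5: "CF Th Side \<Gamma> (insert B \<Delta>)"
      using cutH[rule_format, of A \<Gamma> "insert B \<Delta>"] 3 4 C by (simp add: cutrel_sub)
    show ?thesis using cutH[rule_format, of B \<Gamma> \<Delta>] 5 2 C by (simp add: cutrel_sub)
  qed
next
  case (DisjR A B \<Delta>2 \<Gamma>2)
  have 1: "CF Th Side \<Gamma> (insert A (insert B \<Delta>))"
    by (intro DisjR.IH[of \<Gamma> "insert A (insert B \<Delta>)"]) (use DisjR.prems in \<open>auto intro: RD_mono[OF DisjR.prems(3)]\<close>)
  show ?case using DisjR.hyps(1) DisjR.prems(2) by (intro CF.DisjR[OF _ 1]) auto
next
  case (ImplL A B \<Gamma>2 \<Delta>2)
  have 1: "CF Th Side \<Gamma> (insert A \<Delta>)"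
    by (intro ImplL.IH(1)[of \<Gamma> "insert A \<Delta>"]) (use ImplL.prems in \<open>auto intro: RD_mono[OF ImplL.prems(3)]\<close>)
  have 2: "CF Th Side (insert B \<Gamma>) \<Delta>"
    by (intro ImplL.IH(2)[of "insert B \<Gamma>" \<Delta>]) (use ImplL.prems in \<open>auto intro: RD_mono[OF ImplL.prems(3)]\<close>)
  show ?case
  proof (cases "Impl A B \<in> \<Gamma>")
    case True then show ?thesis using 1 2 by (rule CF.ImplL)
  next
    case False then have C: "C = Impl A B" using ImplL.hyps(1) ImplL.prems(1) by auto
    then have 3: "CF Th Side (insert A \<Gamma>) (insert B \<Delta>)" using ImplL.prems(3) by auto
    have 4: "CF Th Side (insert B (insert A \<Gamma>)) \<Delta>" using 2 by (rule CF_weak) auto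
    have 5: "CF Th Side (insert A \<Gamma>) \<Delta>"
      using cutH[rule_format, of B "insert A \<Gamma>" \<Delta>] 3 4 C by (simp add: cutrel_sub)
    show ?thesis using cutH[rule_format, of A \<Gamma> \<Delta>] 1 5 C by (simp add: cutrel_sub)
  qed
next
  case (ImplR A B \<Delta>2 \<Gamma>2)
  have 1: "CF Th Side (insert A \<Gamma>) (insert B \<Delta>)"
    by (intro ImplR.IH[of "insert A \<Gamma>" "insert B \<Delta>"]) (use ImplR.prems in \<open>auto intro: RD_mono[OF ImplR.prems(3)]\<close>)
  show ?case using ImplR.hyps(1) ImplR.prems(2) by (intro CF.ImplR[OF _ 1]) auto
next
  case (BoxR p \<Delta>2 rs \<Gamma>2)
  have 1: "CF Th Side \<Gamma> (insert (conjs (map fst rs)) \<Delta>)"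
    by (intro BoxR.IH[of \<Gamma> "insert (conjs (map fst rs)) \<Delta>"]) (use BoxR.prems in \<open>auto intro: RD_mono[OF BoxR.prems(3)]\<close>)
  show ?case using BoxR.hyps(1) BoxR.prems(2) by (intro CF.BoxR[OF _ BoxR.hyps(2) BoxR.hyps(3) 1]) auto
next
  case (BoxL p \<Gamma>2 \<Delta>2)
  have 1: "CF Th Side (\<Gamma> \<union> fst ` S) \<Delta>" if "finite S" "S \<subseteq> Th" "Side (snd ` S) {p}" for S
    by (intro BoxL.IH[OF that, of "\<Gamma> \<union> fst ` S" \<Delta>]) (use BoxL.prems in \<open>auto intro: RD_mono[OF BoxL.prems(3)]\<close>)
  show ?case
  proof (cases "Box p \<in> \<Gamma>")
    case True then show ?thesis using 1 by (rule CF.BoxL)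
  next
    case False then have C: "C = Box p" using BoxL.hyps(1) BoxL.prems(1) by auto
    then obtain rs where rs: "set rs \<subseteq> Th" "Side (set (map snd rs)) {p}" "CF Th Side \<Gamma> (insert (conjs (map fst rs)) \<Delta>)"
      using BoxL.prems(3) by auto
    have s: "Side (snd ` set rs) {p}" using rs(2) by simp
    have 2: "CF Th Side (\<Gamma> \<union> fst ` set rs) \<Delta>" by (rule 1[OF finite_set rs(1) s])
    have 3: "CF Th Side (insert (conjs (map fst rs)) \<Gamma>) \<Delta>"
      using CF_conjs_L[of Th Side "map fst rs" \<Gamma> \<Delta>] 2 by (simp add: Un_commute)
    have "dp (conjs (map fst rs)) = 0" using ct_conjs[OF ct rs(1)] by (rule boxfree_dp)
    then have "(conjs (map fst rs), C) \<in> cutrel" using C by (intro cutrel_dp) simp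
    then show ?thesis using cutH rs(3) 3 by blast
  qed
qed

lemma L1:
  assumes cutH: "\<forall>C' \<Gamma> \<Delta>. (C', C) \<in> cutrel \<longrightarrow> CF Th Side \<Gamma> (insert C' \<Delta>) \<longrightarrow> CF Th Side (insert C' \<Gamma>) \<Delta> \<longrightarrow> CF Th Side \<Gamma> \<Delta>"
    and ct: "causal_theory Th"
  shows "CF Th Side \<Gamma>1 \<Delta>1 \<Longrightarrow> \<Gamma>1 \<subseteq> \<Gamma> \<Longrightarrow> \<Delta>1 \<subseteq> insert C \<Delta> \<Longrightarrow> CF Th Side (insert C \<Gamma>) \<Delta> \<Longrightarrow> CF Th Side \<Gamma> \<Delta>"
proof (induction arbitrary: \<Gamma> \<Delta> rule: CF.induct)
  note L2' = L2[OF cutH ct]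
  {
    case (Ax A \<Gamma>1 \<Delta>1)
    show ?case
    proof (cases "A \<in> \<Delta>")
      case True then show ?thesis using Ax.hyps Ax.prems(1) by (intro CF.Ax[of A]) auto
    next
      case False then have "A = C" "A \<in> \<Gamma>" using Ax.hyps Ax.prems by auto
      then show ?thesis using Ax.prems(3) by (simp add: insert_absorb)
    qed
  next
    case (BotL \<Gamma>1 \<Delta>1)
    then show ?case by (intro CF.BotL) auto
  next
    case (TopR \<Delta>1 \<Gamma>1)
    show ?case
    proof (cases "Top \<in> \<Delta>")
      case True then show ?thesis by (rule CF.TopR)
    next
      case False then have "C = Top" using TopR.hyps TopR.prems by auto
      then show ?thesis using L2'[OF TopR.prems(3), of \<Gamma> \<Delta>] by simp
    qed
  next
    case (NegL A \<Gamma>1 \<Delta>1)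
    have 1: "CF Th Side \<Gamma> (insert A \<Delta>)"
      by (rule NegL.IH) (use NegL.prems in \<open>auto intro: CF_weak[OF NegL.prems(3)]\<close>)
    show ?case using NegL.hyps(1) NegL.prems(1) by (intro CF.NegL[OF _ 1]) auto
  next
    case (NegR A \<Delta>1 \<Gamma>1)
    have 1: "CF Th Side (insert A \<Gamma>) \<Delta>"
      by (rule NegR.IH) (use NegR.prems in \<open>auto intro: CF_weak[OF NegR.prems(3)]\<close>)
    show ?case
    proof (cases "Neg A \<in> \<Delta>")
      case True then show ?thesis using 1 by (rule CF.NegR)
    next
      case False then have "C = Neg A" using NegR.hyps(1) NegR.prems(2) by auto
      then show ?thesis using L2'[OF NegR.prems(3), of \<Gamma> \<Delta>] 1 by simp
    qed
  next
    case (ConjL A B \<Gamma>1 \<Delta>1)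
    have 1: "CF Th Side (insert A (insert B \<Gamma>)) \<Delta>"
      by (rule ConjL.IH) (use ConjL.prems in \<open>auto intro: CF_weak[OF ConjL.prems(3)]\<close>)
    show ?case using ConjL.hyps(1) ConjL.prems(1) by (intro CF.ConjL[OF _ 1]) auto
  next
    case (ConjR A B \<Delta>1 \<Gamma>1)
    have 1: "CF Th Side \<Gamma> (insert A \<Delta>)"
      by (rule ConjR.IH(1)) (use ConjR.prems in \<open>auto intro: CF_weak[OF ConjR.prems(3)]\<close>)
    have 2: "CF Th Side \<Gamma> (insert B \<Delta>)"
      by (rule ConjR.IH(2)) (use ConjR.prems in \<open>auto intro: CF_weak[OF ConjR.prems(3)]\<close>)
    show ?case
    proof (cases "Conj A B \<in> \<Delta>")
      case True then show ?thesis using 1 2 by (rule CF.ConjR)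
    next
      case False then have "C = Conj A B" using ConjR.hyps(1) ConjR.prems(2) by auto
      then show ?thesis using L2'[OF ConjR.prems(3), of \<Gamma> \<Delta>] 1 2 by simp
    qed
  next
    case (DisjL A B \<Gamma>1 \<Delta>1)
    have 1: "CF Th Side (insert A \<Gamma>) \<Delta>"
      by (rule DisjL.IH(1)) (use DisjL.prems in \<open>auto intro: CF_weak[OF DisjL.prems(3)]\<close>)
    have 2: "CF Th Side (insert B \<Gamma>) \<Delta>"
      by (rule DisjL.IH(2)) (use DisjL.prems in \<open>auto intro: CF_weak[OF DisjL.prems(3)]\<close>)
    show ?case using DisjL.hyps(1) DisjL.prems(1) by (intro CF.DisjL[OF _ 1 2]) auto
  next
    case (DisjR A B \<Delta>1 \<Gamma>1)
    have 1: "CF Th Side \<Gamma> (insert A (insert B \<Delta>))"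
      by (rule DisjR.IH) (use DisjR.prems in \<open>auto intro: CF_weak[OF DisjR.prems(3)]\<close>)
    show ?case
    proof (cases "Disj A B \<in> \<Delta>")
      case True then show ?thesis using 1 by (rule CF.DisjR)
    next
      case False then have "C = Disj A B" using DisjR.hyps(1) DisjR.prems(2) by auto
      then show ?thesis using L2'[OF DisjR.prems(3), of \<Gamma> \<Delta>] 1 by simp
    qed
  next
    case (ImplL A B \<Gamma>1 \<Delta>1)
    have 1: "CF Th Side \<Gamma> (insert A \<Delta>)"
      by (rule ImplL.IH(1)) (use ImplL.prems in \<open>auto intro: CF_weak[OF ImplL.prems(3)]\<close>)
    have 2: "CF Th Side (insert B \<Gamma>) \<Delta>"
      by (rule ImplL.IH(2)) (use ImplL.prems in \<open>auto intro: CF_weak[OF ImplL.prems(3)]\<close>)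
    show ?case using ImplL.hyps(1) ImplL.prems(1) by (intro CF.ImplL[OF _ 1 2]) auto
  next
    case (ImplR A B \<Delta>1 \<Gamma>1)
    have 1: "CF Th Side (insert A \<Gamma>) (insert B \<Delta>)"
      by (rule ImplR.IH) (use ImplR.prems in \<open>auto intro: CF_weak[OF ImplR.prems(3)]\<close>)
    show ?case
    proof (cases "Impl A B \<in> \<Delta>")
      case True then show ?thesis using 1 by (rule CF.ImplR)
    next
      case False then have "C = Impl A B" using ImplR.hyps(1) ImplR.prems(2) by auto
      then show ?thesis using L2'[OF ImplR.prems(3), of \<Gamma> \<Delta>] 1 by simp
    qed
  next
    case (BoxR p \<Delta>1 rs \<Gamma>1)
    have 1: "CF Th Side \<Gamma> (insert (conjs (map fst rs)) \<Delta>)"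
      by (rule BoxR.IH) (use BoxR.prems in \<open>auto intro: CF_weak[OF BoxR.prems(3)]\<close>)
    show ?case
    proof (cases "Box p \<in> \<Delta>")
      case True then show ?thesis using BoxR.hyps(2,3) 1 by (rule CF.BoxR)
    next
      case False then have "C = Box p" using BoxR.hyps(1) BoxR.prems(2) by auto
      then show ?thesis using L2'[OF BoxR.prems(3), of \<Gamma> \<Delta>] 1 BoxR.hyps(2,3) by auto
    qed
  next
    case (BoxL p \<Gamma>1 \<Delta>1)
    have 1: "CF Th Side (\<Gamma> \<union> fst ` S) \<Delta>" if "finite S" "S \<subseteq> Th" "Side (snd ` S) {p}" for S
      by (rule BoxL.IH[OF that]) (use BoxL.prems in \<open>auto intro: CF_weak[OF BoxL.prems(3)]\<close>)
    show ?case by (rule CF.BoxL[of p]) (use BoxL.hyps(1) BoxL.prems(1) 1 in blast)+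
  }
qed

theorem cut_adm:
  assumes ct: "causal_theory Th"
  shows "CF Th Side \<Gamma> (insert C \<Delta>) \<Longrightarrow> CF Th Side (insert C \<Gamma>) \<Delta> \<Longrightarrow> CF Th Side \<Gamma> \<Delta>"
proof (induction C arbitrary: \<Gamma> \<Delta> rule: wf_induct_rule[OF wf_cutrel])
  case (1 C)
  show ?case
    by (rule L1[OF _ ct 1(2) subset_refl subset_refl 1(3)]) (use 1(1) in blast)
qed

theorem calc_CF:
  assumes ct: "causal_theory Th"
  shows "calc Th Side \<Gamma> \<Delta> \<Longrightarrow> CF Th Side \<Gamma> \<Delta>"
proof (induction rule: calc.induct)
  case (ax p) then show ?case by (intro CF.Ax[of p]) auto
next
  case botL then show ?case by (intro CF.BotL) auto
next
  case topR then show ?case by (intro CF.TopR) auto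
next
  case (weak \<Gamma> \<Delta> \<Gamma>' \<Delta>') then show ?case using CF_weak by blast
next
  case (negL \<Gamma> A \<Delta>)
  show ?case by (rule CF.NegL[of A]) (auto intro: CF_weak[OF negL.IH])
next
  case (negR A \<Gamma> \<Delta>)
  show ?case by (rule CF.NegR[of A]) (auto intro: CF_weak[OF negR.IH])
next
  case (conjL A B \<Gamma> \<Delta>)
  show ?case by (rule CF.ConjL[of A B]) (auto intro: CF_weak[OF conjL.IH])
next
  case (conjR \<Gamma> A \<Delta> B)
  show ?case by (rule CF.ConjR[of A B]) (auto intro: CF_weak[OF conjR.IH(1)] CF_weak[OF conjR.IH(2)])
next
  case (disjL A \<Gamma> \<Delta> B)
  show ?case by (rule CF.DisjL[of A B]) (auto intro: CF_weak[OF disjL.IH(1)] CF_weak[OF disjL.IH(2)])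
next
  case (disjR \<Gamma> A B \<Delta>)
  show ?case by (rule CF.DisjR[of A B]) (auto intro: CF_weak[OF disjR.IH])
next
  case (implL \<Gamma> A \<Delta> B)
  show ?case by (rule CF.ImplL[of A B]) (auto intro: CF_weak[OF implL.IH(1)] CF_weak[OF implL.IH(2)])
next
  case (implR A \<Gamma> B \<Delta>)
  show ?case by (rule CF.ImplR[of A B]) (auto intro: CF_weak[OF implR.IH])
next
  case (boxR rs p \<Gamma> \<Delta>)
  show ?case by (rule CF.BoxR[where Th=Th and Side=Side and p=p and rs=rs, OF _ boxR.hyps(1,2)]) (auto intro: CF_weak[OF boxR.IH])
next
  case (boxL p \<Gamma> \<Delta>)
  show ?case by (rule CF.BoxL[of p]) (auto intro: CF_weak[OF boxL.IH])
next
  case (cut \<Gamma> p \<Delta> \<Gamma>' \<Delta>')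
  have 1: "CF Th Side (\<Gamma> \<union> \<Gamma>') (insert p (\<Delta> \<union> \<Delta>'))" by (rule CF_weak[OF cut.IH(1)]) auto
  have 2: "CF Th Side (insert p (\<Gamma> \<union> \<Gamma>')) (\<Delta> \<union> \<Delta>')" by (rule CF_weak[OF cut.IH(2)]) auto
  show ?case by (rule cut_adm[OF ct 1 2])
qed

lemma alpha_boxfree: "boxfree x \<Longrightarrow> alpha \<phi> \<psi> x = x"
  by (induction x) auto

lemma alpha_conjs: "alpha \<phi> \<psi> (conjs xs) = conjs (map (alpha \<phi> \<psi>) xs)"
  by (induction xs rule: conjs.induct) auto

lemma alpha_not_Box[simp]: "(alpha \<phi> \<psi> x = Box y) = False"
  by (cases x) auto

lemma alpha_not_ConjBox[simp]: "(alpha \<phi> \<psi> x = Conj a (Box y)) = False"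
  by (cases x) auto

lemma alpha_not_Box'[simp]: "(Box y = alpha \<phi> \<psi> x) = False"
  by (cases x) auto

lemma alpha_not_ConjBox'[simp]: "(Conj a (Box y) = alpha \<phi> \<psi> x) = False"
  by (cases x) auto

lemma alpha_inj: "alpha \<phi> \<psi> x = alpha \<phi> \<psi> y \<Longrightarrow> x = y"
proof (induction x arbitrary: y)
  case (Atom a) then show ?case by (cases y) auto
next
  case Top then show ?case by (cases y) auto
next
  case Bot then show ?case by (cases y) auto
next
  case (Neg x) then show ?case by (cases y) auto
next
  case (Conj x1 x2) then show ?case by (cases y) auto
next
  case (Disj x1 x2) then show ?case by (cases y) auto
next
  case (Impl x1 x2) then show ?case by (cases y) auto
next
  case (Box x) then show ?case by (cases y) auto
qed

fun good :: "('a fm \<Rightarrow> bool) \<Rightarrow> 'a fm \<Rightarrow> bool" where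
  "good ok (Atom a) = True"
| "good ok Top = True"
| "good ok Bot = True"
| "good ok (Neg A) = good ok A"
| "good ok (Conj A B) = (good ok A \<and> good ok B)"
| "good ok (Disj A B) = (good ok A \<and> good ok B)"
| "good ok (Impl A B) = (good ok A \<and> good ok B)"
| "good ok (Box q) = ok q"

lemma boxfree_good: "boxfree x \<Longrightarrow> good ok x"
  by (induction x) auto

lemma good_dp: "dp y \<le> n \<Longrightarrow> good (\<lambda>q. dp q < n) y"
  by (induction y) auto

fun lc :: "'a causal_theory \<Rightarrow> ('a fm set \<Rightarrow> 'a fm set \<Rightarrow> bool) \<Rightarrow> 'a fm \<Rightarrow> 'a fm \<Rightarrow> 'a fm set set" where
  "lc Th Side \<phi> (Box Y) = {fst ` S | S. finite S \<and> S \<subseteq> Th \<and> Side (snd ` S) {Y}}"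
| "lc Th Side \<phi> (Conj A (Box Y)) = (if A = \<phi> then {insert \<phi> (fst ` S) | S. finite S \<and> S \<subseteq> Th \<and> Side (snd ` S) {Y}} else {})"
| "lc Th Side \<phi> _ = {}"

lemma lc_alpha[simp]: "lc Th Side \<phi> (alpha \<phi> \<psi> x) = {}"
proof (cases x)
  case (Conj x1 x2) then show ?thesis by (cases "alpha \<phi> \<psi> x2") auto
qed auto

lemma lc_Conj: "c \<in> lc Th Side \<phi> (Conj A B) \<Longrightarrow>
   A = \<phi> \<and> (\<exists>Y S. B = Box Y \<and> c = insert \<phi> (fst ` S) \<and> finite S \<and> S \<subseteq> Th \<and> Side (snd ` S) {Y})"
  by (cases B) (auto split: if_splits)

lemma lc_Box: "c \<in> lc Th Side \<phi> (Box Y) \<Longrightarrow> (\<exists>S. c = fst ` S \<and> finite S \<and> S \<subseteq> Th \<and> Side (snd ` S) {Y})"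
  by auto

lemma H1:
  assumes "finite S" "S \<subseteq> Th" "Side (snd ` S) {q}" "fst ` S \<subseteq> X" "Box q \<in> Y"
  shows "CF Th Side X Y"
proof -
  obtain rs where rs: "set rs = S" using finite_list[OF assms(1)] by blast
  have 1: "CF Th Side X (insert (conjs (map fst rs)) Y)"
    by (rule CF_conjs_R) (use rs assms(4) in auto)
  have 2: "Side (set (map snd rs)) {q}" using rs assms(3) by simp
  show ?thesis by (rule CF.BoxR[where p=q and rs=rs, OF assms(5) _ 2 1]) (use rs assms(2) in simp)
qed

lemma calc_impl_fwd:
  assumes "calc Th Side B {Impl a b}"
  shows "calc Th Side (insert a B) {b}"
proof -
  have 1: "calc Th Side {a} (insert a {b})" using calc.weak[OF calc.ax[of Th Side a], of "{a}" "{a,b}"] by auto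
  have 2: "calc Th Side (insert b {a}) {b}" using calc.weak[OF calc.ax[of Th Side b], of "{b,a}" "{b}"] by auto
  have 3: "calc Th Side (insert (Impl a b) {a}) {b}" by (rule calc.implL[OF 1 2])
  have 4: "calc Th Side B (insert (Impl a b) {})" using assms by simp
  have "calc Th Side (B \<union> {a}) ({} \<union> {b})" by (rule calc.cut[OF 4 3])
  then show ?thesis by simp
qed

lemma calc_impl_bwd:
  assumes "calc Th Side (insert a B) {b}"
  shows "calc Th Side B {Impl a b}"
  using calc.implR[of Th Side a B b "{}"] assms by simp

lemma CF_conjs_sub:
  assumes ct: "causal_theory Th" and "CF Th Side \<Gamma> (insert (conjs xs) \<Delta>)" "set ys \<subseteq> set xs"
  shows "CF Th Side \<Gamma> (insert (conjs ys) \<Delta>)"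
proof -
  have 1: "CF Th Side \<Gamma> (insert (conjs xs) (insert (conjs ys) \<Delta>))" by (rule CF_weak[OF assms(2)]) auto
  have "CF Th Side (set xs \<union> \<Gamma>) (insert (conjs ys) \<Delta>)" by (rule CF_conjs_R) (use assms(3) in auto)
  then have 2: "CF Th Side (insert (conjs xs) \<Gamma>) (insert (conjs ys) \<Delta>)" by (rule CF_conjs_L)
  show ?thesis by (rule cut_adm[OF ct 1 2])
qed

lemma Dcalc: "is_derivability Th D \<Longrightarrow> D X Y = calc Th D X Y"
  unfolding is_derivability_def by metis

lemma lc_extend:
  assumes "\<forall>x\<in>\<Gamma>0. x \<in> X \<or> (\<exists>c\<in>L x. c \<subseteq> G)" "c0 \<in> L A" "c0 \<subseteq> G'" "G \<subseteq> G'"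
  shows "\<forall>x\<in>insert A \<Gamma>0. x \<in> X \<or> (\<exists>c\<in>L x. c \<subseteq> G')"
proof
  fix x assume "x \<in> insert A \<Gamma>0"
  then show "x \<in> X \<or> (\<exists>c\<in>L x. c \<subseteq> G')"
  proof
    assume "x = A" then show ?thesis using assms(2,3) by blast
  next
    assume "x \<in> \<Gamma>0"
    then have "x \<in> X \<or> (\<exists>c\<in>L x. c \<subseteq> G)" using assms(1) by blast
    then show ?thesis using assms(4) by blast
  qed
qed

lemma ct_insert: "causal_theory Th \<Longrightarrow> boxfree a \<Longrightarrow> boxfree b \<Longrightarrow> causal_theory (insert (a, b) Th)"
  unfolding causal_theory_def by auto

lemma D_impl_fwd: "is_derivability Th D \<Longrightarrow> D B {Impl a b} \<Longrightarrow> D (insert a B) {b}"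
  using Dcalc[of Th D] calc_impl_fwd by metis

lemma D_impl_bwd: "is_derivability Th D \<Longrightarrow> D (insert a B) {b} \<Longrightarrow> D B {Impl a b}"
  using Dcalc[of Th D] calc_impl_bwd by metis

lemma L_new:
  assumes ct': "causal_theory Th'" and fixD': "is_derivability Th' D'" and inTh: "(\<phi>, \<psi>) \<in> Th'"
    and 1: "CF Th' D' X (insert \<phi> Y)" and 2: "CF Th' D' X (insert (Box (Impl \<psi> q)) Y)"
  shows "CF Th' D' X (insert (Box q) Y)"
proof -
  have key: "CF Th' D' (insert (Box (Impl \<psi> q)) (insert \<phi> X)) (insert (Box q) Y)"
  proof (rule CF.BoxL[of "Impl \<psi> q"])
    show "Box (Impl \<psi> q) \<in> insert (Box (Impl \<psi> q)) (insert \<phi> X)" by simp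
  next
    fix S assume S: "finite S" "S \<subseteq> Th'" "D' (snd ` S) {Impl \<psi> q}"
    have d: "D' (snd ` insert (\<phi>, \<psi>) S) {q}" using D_impl_fwd[OF fixD' S(3)] by simp
    show "CF Th' D' (insert (Box (Impl \<psi> q)) (insert \<phi> X) \<union> fst ` S) (insert (Box q) Y)"
      by (rule H1[where Th=Th' and Side=D' and q=q and S="insert (\<phi>, \<psi>) S", OF _ _ d]) (use S inTh in auto)
  qed
  have 3: "CF Th' D' (insert \<phi> X) (insert (Box (Impl \<psi> q)) (insert (Box q) Y))"
    by (rule CF_weak[OF 2]) auto
  have 4: "CF Th' D' (insert \<phi> X) (insert (Box q) Y)" by (rule cut_adm[OF ct' 3 key])
  have 5: "CF Th' D' X (insert \<phi> (insert (Box q) Y))" by (rule CF_weak[OF 1]) auto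
  show ?thesis by (rule cut_adm[OF ct' 5 4])
qed

context
  fixes \<Theta> :: "'a causal_theory" and \<phi> \<psi> :: "'a fm"
    and D D' :: "'a fm set \<Rightarrow> 'a fm set \<Rightarrow> bool" and ok :: "'a fm \<Rightarrow> bool"
  assumes ct: "causal_theory \<Theta>" and b\<phi>: "boxfree \<phi>" and b\<psi>: "boxfree \<psi>"
    and fixD: "is_derivability \<Theta> D" and fixD': "is_derivability (insert (\<phi>, \<psi>) \<Theta>) D'"
    and SC: "\<And>q S. ok q \<Longrightarrow> finite S \<Longrightarrow> S \<subseteq> \<Theta> \<Longrightarrow> D' (snd ` S) {q} = D (snd ` S) {alpha \<phi> \<psi> q}"
    and okI: "\<And>q. ok q \<Longrightarrow> ok (Impl \<psi> q)"
begin

lemma ct': "causal_theory (insert (\<phi>, \<psi>) \<Theta>)" using ct_insert[OF ct b\<phi> b\<psi>] .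

lemma SCI: "ok q \<Longrightarrow> finite S \<Longrightarrow> S \<subseteq> \<Theta> \<Longrightarrow> D' (snd ` S) {Impl \<psi> q} = D (snd ` S) {Impl \<psi> (alpha \<phi> \<psi> q)}"
  using SC[OF okI] alpha_boxfree[OF b\<psi>] by simp

lemma fst_boxfree': "S \<subseteq> insert (\<phi>, \<psi>) \<Theta> \<Longrightarrow> x \<in> fst ` S \<Longrightarrow> boxfree x"
  using ct' ct_boxfree by fastforce

lemma alpha_fst: "S \<subseteq> insert (\<phi>, \<psi>) \<Theta> \<Longrightarrow> alpha \<phi> \<psi> ` fst ` S = fst ` S"
  using alpha_boxfree fst_boxfree' by (metis (no_types, lifting) image_cong image_ident)

lemma fwd:
  "CF (insert (\<phi>, \<psi>) \<Theta>) D' \<Gamma> \<Delta> \<Longrightarrow> (\<forall>x\<in>\<Gamma>. good ok x) \<Longrightarrow> (\<forall>x\<in>\<Delta>. good ok x)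
   \<Longrightarrow> CF \<Theta> D (alpha \<phi> \<psi> ` \<Gamma>) (alpha \<phi> \<psi> ` \<Delta>)"
proof (induction rule: CF.induct)
  case (Ax A \<Gamma> \<Delta>) then show ?case by (intro CF.Ax[of "alpha \<phi> \<psi> A"]) auto
next
  case (BotL \<Gamma> \<Delta>) then show ?case by (intro CF.BotL) force
next
  case (TopR \<Delta> \<Gamma>) then show ?case by (intro CF.TopR) force
next
  case (NegL A \<Gamma> \<Delta>)
  have 1: "CF \<Theta> D (alpha \<phi> \<psi> ` \<Gamma>) (insert (alpha \<phi> \<psi> A) (alpha \<phi> \<psi> ` \<Delta>))"
    using NegL.IH NegL.prems NegL.hyps(1) by fastforce
  show ?case by (rule CF.NegL[OF _ 1]) (use NegL.hyps(1) in force)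
next
  case (NegR A \<Delta> \<Gamma>)
  have 1: "CF \<Theta> D (insert (alpha \<phi> \<psi> A) (alpha \<phi> \<psi> ` \<Gamma>)) (alpha \<phi> \<psi> ` \<Delta>)"
    using NegR.IH NegR.prems NegR.hyps(1) by fastforce
  show ?case by (rule CF.NegR[OF _ 1]) (use NegR.hyps(1) in force)
next
  case (ConjL A B \<Gamma> \<Delta>)
  have 1: "CF \<Theta> D (insert (alpha \<phi> \<psi> A) (insert (alpha \<phi> \<psi> B) (alpha \<phi> \<psi> ` \<Gamma>))) (alpha \<phi> \<psi> ` \<Delta>)"
    using ConjL.IH ConjL.prems ConjL.hyps(1) by fastforce
  show ?case by (rule CF.ConjL[OF _ 1]) (use ConjL.hyps(1) in force)
next
  case (ConjR A B \<Delta> \<Gamma>)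
  have 1: "CF \<Theta> D (alpha \<phi> \<psi> ` \<Gamma>) (insert (alpha \<phi> \<psi> A) (alpha \<phi> \<psi> ` \<Delta>))"
    using ConjR.IH(1) ConjR.prems ConjR.hyps(1) by fastforce
  have 2: "CF \<Theta> D (alpha \<phi> \<psi> ` \<Gamma>) (insert (alpha \<phi> \<psi> B) (alpha \<phi> \<psi> ` \<Delta>))"
    using ConjR.IH(2) ConjR.prems ConjR.hyps(1) by fastforce
  show ?case by (rule CF.ConjR[OF _ 1 2]) (use ConjR.hyps(1) in force)
next
  case (DisjL A B \<Gamma> \<Delta>)
  have 1: "CF \<Theta> D (insert (alpha \<phi> \<psi> A) (alpha \<phi> \<psi> ` \<Gamma>)) (alpha \<phi> \<psi> ` \<Delta>)"
    using DisjL.IH(1) DisjL.prems DisjL.hyps(1) by fastforce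
  have 2: "CF \<Theta> D (insert (alpha \<phi> \<psi> B) (alpha \<phi> \<psi> ` \<Gamma>)) (alpha \<phi> \<psi> ` \<Delta>)"
    using DisjL.IH(2) DisjL.prems DisjL.hyps(1) by fastforce
  show ?case by (rule CF.DisjL[OF _ 1 2]) (use DisjL.hyps(1) in force)
next
  case (DisjR A B \<Delta> \<Gamma>)
  have 1: "CF \<Theta> D (alpha \<phi> \<psi> ` \<Gamma>) (insert (alpha \<phi> \<psi> A) (insert (alpha \<phi> \<psi> B) (alpha \<phi> \<psi> ` \<Delta>)))"
    using DisjR.IH DisjR.prems DisjR.hyps(1) by fastforce
  show ?case by (rule CF.DisjR[OF _ 1]) (use DisjR.hyps(1) in force)
next
  case (ImplL A B \<Gamma> \<Delta>)
  have 1: "CF \<Theta> D (alpha \<phi> \<psi> ` \<Gamma>) (insert (alpha \<phi> \<psi> A) (alpha \<phi> \<psi> ` \<Delta>))"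
    using ImplL.IH(1) ImplL.prems ImplL.hyps(1) by fastforce
  have 2: "CF \<Theta> D (insert (alpha \<phi> \<psi> B) (alpha \<phi> \<psi> ` \<Gamma>)) (alpha \<phi> \<psi> ` \<Delta>)"
    using ImplL.IH(2) ImplL.prems ImplL.hyps(1) by fastforce
  show ?case by (rule CF.ImplL[OF _ 1 2]) (use ImplL.hyps(1) in force)
next
  case (ImplR A B \<Delta> \<Gamma>)
  have 1: "CF \<Theta> D (insert (alpha \<phi> \<psi> A) (alpha \<phi> \<psi> ` \<Gamma>)) (insert (alpha \<phi> \<psi> B) (alpha \<phi> \<psi> ` \<Delta>))"
    using ImplR.IH ImplR.prems ImplR.hyps(1) by fastforce
  show ?case by (rule CF.ImplR[OF _ 1]) (use ImplR.hyps(1) in force)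
next
  case (BoxR p \<Delta> rs \<Gamma>)
  let ?a = "alpha \<phi> \<psi>"
  let ?X = "Conj \<phi> (Box (Impl \<psi> (?a p)))"
  let ?Y = "Box (?a p)"
  have okp: "ok p" using BoxR.prems(2) BoxR.hyps(1) by fastforce
  have cb: "boxfree (conjs (map fst rs))" by (rule ct_conjs[OF ct' BoxR.hyps(2)])
  have goodc: "good ok (conjs (map fst rs))" using cb by (rule boxfree_good)
  have IH: "CF \<Theta> D (?a ` \<Gamma>) (insert (conjs (map fst rs)) (?a ` \<Delta>))"
    using BoxR.IH BoxR.prems goodc alpha_boxfree[OF cb] by auto
  have main: "CF \<Theta> D (?a ` \<Gamma>) (insert ?X (insert ?Y (?a ` \<Delta>)))"
  proof (cases "(\<phi>, \<psi>) \<in> set rs")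
    case True
    define rs' where "rs' = filter (\<lambda>r. r \<noteq> (\<phi>, \<psi>)) rs"
    have rs'sub: "set rs' \<subseteq> \<Theta>" using BoxR.hyps(2) unfolding rs'_def by auto
    have sndeq: "set (map snd rs) = insert \<psi> (snd ` set rs')"
      using True unfolding rs'_def by force
    have "D' (insert \<psi> (snd ` set rs')) {p}" using BoxR.hyps(3) sndeq by simp
    then have "D' (snd ` set rs') {Impl \<psi> p}" by (rule D_impl_bwd[OF fixD'])
    then have side: "D (set (map snd rs')) {Impl \<psi> (?a p)}" using SCI[OF okp finite_set rs'sub] by simp
    have i: "CF \<Theta> D (?a ` \<Gamma>) (insert \<phi> (?a ` \<Delta>))"
      using CF_conjs_sub[OF ct IH, of "[\<phi>]"] True by force
    have ii: "CF \<Theta> D (?a ` \<Gamma>) (insert (conjs (map fst rs')) (?a ` \<Delta>))"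
      by (rule CF_conjs_sub[OF ct IH]) (auto simp: rs'_def)
    have i': "CF \<Theta> D (?a ` \<Gamma>) (insert \<phi> (insert ?X (insert ?Y (?a ` \<Delta>))))"
      by (rule CF_weak[OF i]) auto
    have ii': "CF \<Theta> D (?a ` \<Gamma>) (insert (conjs (map fst rs')) (insert (Box (Impl \<psi> (?a p))) (insert ?X (insert ?Y (?a ` \<Delta>)))))"
      by (rule CF_weak[OF ii]) auto
    have iii: "CF \<Theta> D (?a ` \<Gamma>) (insert (Box (Impl \<psi> (?a p))) (insert ?X (insert ?Y (?a ` \<Delta>))))"
      by (rule CF.BoxR[where p="Impl \<psi> (?a p)" and rs=rs', OF _ rs'sub side ii']) simp
    show ?thesis by (rule CF.ConjR[of \<phi> "Box (Impl \<psi> (?a p))", OF _ i' iii]) simp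
  next
    case False
    have sub: "set rs \<subseteq> \<Theta>" using BoxR.hyps(2) False by auto
    have side: "D (set (map snd rs)) {?a p}" using SC[OF okp finite_set sub] BoxR.hyps(3) by simp
    have ii': "CF \<Theta> D (?a ` \<Gamma>) (insert (conjs (map fst rs)) (insert ?X (insert ?Y (?a ` \<Delta>))))"
      by (rule CF_weak[OF IH]) auto
    show ?thesis by (rule CF.BoxR[where p="?a p" and rs=rs, OF _ sub side ii']) simp
  qed
  show ?case by (rule CF.DisjR[OF _ main]) (use BoxR.hyps(1) in force)
next
  case (BoxL p \<Gamma> \<Delta>)
  let ?a = "alpha \<phi> \<psi>"
  let ?X = "Conj \<phi> (Box (Impl \<psi> (?a p)))"
  let ?Y = "Box (?a p)"
  have okp: "ok p" using BoxL.prems(1) BoxL.hyps(1) by fastforce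
  have IH: "CF \<Theta> D (?a ` \<Gamma> \<union> fst ` S) (?a ` \<Delta>)"
    if "finite S" "S \<subseteq> insert (\<phi>, \<psi>) \<Theta>" "D' (snd ` S) {p}" for S
  proof -
    have "\<forall>x\<in>\<Gamma> \<union> fst ` S. good ok x" using BoxL.prems(1) fst_boxfree'[OF that(2)] boxfree_good by blast
    then have "CF \<Theta> D (?a ` (\<Gamma> \<union> fst ` S)) (?a ` \<Delta>)" using BoxL.IH[OF that] BoxL.prems(2) by blast
    then show ?thesis using alpha_fst[OF that(2)] by (simp add: image_Un)
  qed
  have X: "CF \<Theta> D (insert ?X (?a ` \<Gamma>)) (?a ` \<Delta>)"
  proof (rule CF.ConjL[of \<phi> "Box (Impl \<psi> (?a p))"])
    show "?X \<in> insert ?X (?a ` \<Gamma>)" by simp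
  next
    show "CF \<Theta> D (insert \<phi> (insert (Box (Impl \<psi> (?a p))) (insert ?X (?a ` \<Gamma>)))) (?a ` \<Delta>)"
    proof (rule CF.BoxL[of "Impl \<psi> (?a p)"])
      show "Box (Impl \<psi> (?a p)) \<in> insert \<phi> (insert (Box (Impl \<psi> (?a p))) (insert ?X (?a ` \<Gamma>)))" by simp
    next
      fix S assume S: "finite S" "S \<subseteq> \<Theta>" "D (snd ` S) {Impl \<psi> (?a p)}"
      have "D' (snd ` S) {Impl \<psi> p}" using SCI[OF okp S(1,2)] S(3) by simp
      then have "D' (insert \<psi> (snd ` S)) {p}" by (rule D_impl_fwd[OF fixD'])
      then have d: "D' (snd ` insert (\<phi>, \<psi>) S) {p}" by simp
      have "CF \<Theta> D (?a ` \<Gamma> \<union> fst ` insert (\<phi>, \<psi>) S) (?a ` \<Delta>)"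
        by (rule IH[OF _ _ d]) (use S in auto)
      then show "CF \<Theta> D (insert \<phi> (insert (Box (Impl \<psi> (?a p))) (insert ?X (?a ` \<Gamma>))) \<union> fst ` S) (?a ` \<Delta>)"
        by (rule CF_weak) auto
    qed
  qed
  have Y: "CF \<Theta> D (insert ?Y (?a ` \<Gamma>)) (?a ` \<Delta>)"
  proof (rule CF.BoxL[of "?a p"])
    show "?Y \<in> insert ?Y (?a ` \<Gamma>)" by simp
  next
    fix S assume S: "finite S" "S \<subseteq> \<Theta>" "D (snd ` S) {?a p}"
    have d: "D' (snd ` S) {p}" using SC[OF okp S(1,2)] S(3) by simp
    have "CF \<Theta> D (?a ` \<Gamma> \<union> fst ` S) (?a ` \<Delta>)"
      by (rule IH[OF _ _ d]) (use S in auto)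
    then show "CF \<Theta> D (insert ?Y (?a ` \<Gamma>) \<union> fst ` S) (?a ` \<Delta>)"
      by (rule CF_weak) auto
  qed
  show ?case by (rule CF.DisjL[OF _ X Y]) (use BoxL.hyps(1) in force)
qed


lemma back_tr:
  "CF \<Theta> D \<Gamma>0 \<Delta>0 \<Longrightarrow> (\<forall>x\<in>\<Gamma>. good ok x) \<Longrightarrow> (\<forall>x\<in>\<Delta>. good ok x) \<Longrightarrow> (\<forall>q\<in>RP. ok q) \<Longrightarrow> (\<forall>q\<in>RC. ok q)
   \<Longrightarrow> (\<forall>x\<in>\<Gamma>0. x \<in> alpha \<phi> \<psi> ` \<Gamma> \<or> (\<exists>c\<in>lc \<Theta> D \<phi> x. c \<subseteq> G))
   \<Longrightarrow> \<Delta>0 \<subseteq> alpha \<phi> \<psi> ` \<Delta> \<union> (\<lambda>q. Box (alpha \<phi> \<psi> q)) ` RP \<union> (\<lambda>q. Conj \<phi> (Box (Impl \<psi> (alpha \<phi> \<psi> q)))) ` RC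
   \<Longrightarrow> CF (insert (\<phi>, \<psi>) \<Theta>) D' (\<Gamma> \<union> G) (\<Delta> \<union> Box ` (RP \<union> RC))"
proof (induction arbitrary: \<Gamma> \<Delta> RP RC G rule: CF.induct)
  case (Ax A \<Gamma>0 \<Delta>0)
  let ?a = "alpha \<phi> \<psi>"
  from Ax.hyps(2) Ax.prems(6) consider (a) d where "d \<in> \<Delta>" "A = ?a d" | (b) q where "q \<in> RP" "A = Box (?a q)"
    | (c) q where "q \<in> RC" "A = Conj \<phi> (Box (Impl \<psi> (?a q)))" by blast
  then show ?case
  proof cases
    case a
    from Ax.hyps(1) Ax.prems(5) have "A \<in> ?a ` \<Gamma> \<or> (\<exists>c\<in>lc \<Theta> D \<phi> A. c \<subseteq> G)" by blast
    then obtain g where "g \<in> \<Gamma>" "A = ?a g" using a by auto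
    then have "d \<in> \<Gamma>" using a alpha_inj by metis
    then show ?thesis using a by (intro CF.Ax[of d]) auto
  next
    case b
    from Ax.hyps(1) Ax.prems(5) have "A \<in> ?a ` \<Gamma> \<or> (\<exists>c\<in>lc \<Theta> D \<phi> A. c \<subseteq> G)" by blast
    then obtain c where "c \<in> lc \<Theta> D \<phi> (Box (?a q))" "c \<subseteq> G" using b by auto
    then obtain S where S: "c = fst ` S" "finite S" "S \<subseteq> \<Theta>" "D (snd ` S) {?a q}" by auto
    have d: "D' (snd ` S) {q}" using SC[OF _ S(2,3)] S(4) b(1) Ax.prems(3) by blast
    show ?thesis by (rule H1[where Th="insert (\<phi>, \<psi>) \<Theta>" and Side=D' and q=q and S=S, OF S(2) _ d]) (use S b \<open>c \<subseteq> G\<close> in auto)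
  next
    case c
    from Ax.hyps(1) Ax.prems(5) have "A \<in> ?a ` \<Gamma> \<or> (\<exists>c\<in>lc \<Theta> D \<phi> A. c \<subseteq> G)" by blast
    then obtain c' where c': "c' \<in> lc \<Theta> D \<phi> (Conj \<phi> (Box (Impl \<psi> (?a q))))" "c' \<subseteq> G" using c by auto
    then obtain S where S: "c' = insert \<phi> (fst ` S)" "finite S" "S \<subseteq> \<Theta>" "D (snd ` S) {Impl \<psi> (?a q)}" by auto
    have "D' (snd ` S) {Impl \<psi> q}" using SCI[OF _ S(2,3)] S(4) c(1) Ax.prems(4) by blast
    then have "D' (insert \<psi> (snd ` S)) {q}" by (rule D_impl_fwd[OF fixD'])
    then have d: "D' (snd ` insert (\<phi>, \<psi>) S) {q}" by simp
    show ?thesis by (rule H1[where Th="insert (\<phi>, \<psi>) \<Theta>" and Side=D' and q=q and S="insert (\<phi>, \<psi>) S", OF _ _ d]) (use S c c' in auto)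
  qed
next
  case (BotL \<Gamma>0 \<Delta>0)
  from BotL.hyps BotL.prems(5) have "Bot \<in> alpha \<phi> \<psi> ` \<Gamma> \<or> (\<exists>c\<in>lc \<Theta> D \<phi> Bot. c \<subseteq> G)" by blast
  then obtain g where "g \<in> \<Gamma>" "Bot = alpha \<phi> \<psi> g" by auto
  then have "g = Bot" by (cases g) auto
  then show ?case using \<open>g \<in> \<Gamma>\<close> by (intro CF.BotL) auto
next
  case (TopR \<Delta>0 \<Gamma>0)
  from TopR.hyps TopR.prems(6) obtain d where "d \<in> \<Delta>" "Top = alpha \<phi> \<psi> d" by auto
  then have "d = Top" by (cases d) auto
  then show ?case using \<open>d \<in> \<Delta>\<close> by (intro CF.TopR) auto
next
  case (NegL A \<Gamma>0 \<Delta>0)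
  from NegL.hyps(1) NegL.prems(5) have "Neg A \<in> alpha \<phi> \<psi> ` \<Gamma> \<or> (\<exists>c\<in>lc \<Theta> D \<phi> (Neg A). c \<subseteq> G)" by blast
  then obtain g where g: "g \<in> \<Gamma>" "Neg A = alpha \<phi> \<psi> g" by auto
  then obtain g' where g': "g = Neg g'" "A = alpha \<phi> \<psi> g'" by (cases g) auto
  have 1: "CF (insert (\<phi>, \<psi>) \<Theta>) D' (\<Gamma> \<union> G) (insert g' \<Delta> \<union> Box ` (RP \<union> RC))"
    by (rule NegL.IH) (use NegL.prems g g' in auto)
  show ?case by (rule CF.NegL[of g']) (use 1 g g' in auto)
next
  case (NegR A \<Delta>0 \<Gamma>0)
  from NegR.hyps(1) NegR.prems(6) obtain d where d: "d \<in> \<Delta>" "Neg A = alpha \<phi> \<psi> d" by auto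
  then obtain d' where d': "d = Neg d'" "A = alpha \<phi> \<psi> d'" by (cases d) auto
  have 1: "CF (insert (\<phi>, \<psi>) \<Theta>) D' (insert d' \<Gamma> \<union> G) (\<Delta> \<union> Box ` (RP \<union> RC))"
    by (rule NegR.IH) (use NegR.prems d d' in auto)
  show ?case by (rule CF.NegR[of d']) (use 1 d d' in auto)
next
  case (ConjL A B \<Gamma>0 \<Delta>0)
  from ConjL.hyps(1) ConjL.prems(5) have "Conj A B \<in> alpha \<phi> \<psi> ` \<Gamma> \<or> (\<exists>c\<in>lc \<Theta> D \<phi> (Conj A B). c \<subseteq> G)" by blast
  then show ?case
  proof
    assume "Conj A B \<in> alpha \<phi> \<psi> ` \<Gamma>"
    then obtain g where g: "g \<in> \<Gamma>" "Conj A B = alpha \<phi> \<psi> g" by auto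
    then obtain g1 g2 where g': "g = Conj g1 g2" "A = alpha \<phi> \<psi> g1" "B = alpha \<phi> \<psi> g2" by (cases g) auto
    have 1: "CF (insert (\<phi>, \<psi>) \<Theta>) D' (insert g1 (insert g2 \<Gamma>) \<union> G) (\<Delta> \<union> Box ` (RP \<union> RC))"
      by (rule ConjL.IH) (use ConjL.prems g g' in auto)
    show ?case by (rule CF.ConjL[of g1 g2]) (use 1 g g' in auto)
  next
    assume "\<exists>c\<in>lc \<Theta> D \<phi> (Conj A B). c \<subseteq> G"
    then obtain c where c: "c \<in> lc \<Theta> D \<phi> (Conj A B)" "c \<subseteq> G" by blast
    from lc_Conj[OF c(1)] obtain Y S where YS: "A = \<phi>" "B = Box Y" "c = insert \<phi> (fst ` S)" "finite S" "S \<subseteq> \<Theta>" "D (snd ` S) {Y}"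
      by blast
    have lcB: "fst ` S \<in> lc \<Theta> D \<phi> B" using YS by auto
    have 1: "CF (insert (\<phi>, \<psi>) \<Theta>) D' (insert \<phi> \<Gamma> \<union> G) (\<Delta> \<union> Box ` (RP \<union> RC))"
    proof (rule ConjL.IH)
      show "\<forall>x\<in>insert \<phi> \<Gamma>. good ok x" using ConjL.prems(1) boxfree_good[OF b\<phi>] by auto
      show "\<forall>x\<in>insert A (insert B \<Gamma>0). x \<in> alpha \<phi> \<psi> ` insert \<phi> \<Gamma> \<or> (\<exists>c\<in>lc \<Theta> D \<phi> x. c \<subseteq> G)"
        using ConjL.prems(5) YS c lcB alpha_boxfree[OF b\<phi>] by auto
    qed (use ConjL.prems in auto)
    show ?case using 1 YS c by (simp add: insert_absorb)
  qed
next
  case (ConjR A B \<Delta>0 \<Gamma>0)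
  let ?a = "alpha \<phi> \<psi>"
  from ConjR.hyps(1) ConjR.prems(6) consider (a) d where "d \<in> \<Delta>" "Conj A B = ?a d"
    | (c) q where "q \<in> RC" "Conj A B = Conj \<phi> (Box (Impl \<psi> (?a q)))" by blast
  then show ?case
  proof cases
    case a
    then obtain d1 d2 where d': "d = Conj d1 d2" "A = ?a d1" "B = ?a d2" by (cases d) auto
    have 1: "CF (insert (\<phi>, \<psi>) \<Theta>) D' (\<Gamma> \<union> G) (insert d1 \<Delta> \<union> Box ` (RP \<union> RC))"
      by (rule ConjR.IH(1)) (use ConjR.prems a d' in auto)
    have 2: "CF (insert (\<phi>, \<psi>) \<Theta>) D' (\<Gamma> \<union> G) (insert d2 \<Delta> \<union> Box ` (RP \<union> RC))"
      by (rule ConjR.IH(2)) (use ConjR.prems a d' in auto)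
    show ?thesis by (rule CF.ConjR[of d1 d2]) (use 1 2 a d' in auto)
  next
    case c
    have AB: "A = \<phi>" "B = Box (?a (Impl \<psi> q))" using c alpha_boxfree[OF b\<psi>] by auto
    have 1: "CF (insert (\<phi>, \<psi>) \<Theta>) D' (\<Gamma> \<union> G) (insert \<phi> \<Delta> \<union> Box ` (RP \<union> RC))"
    proof (rule ConjR.IH(1))
      show "\<forall>x\<in>insert \<phi> \<Delta>. good ok x" using ConjR.prems(2) boxfree_good[OF b\<phi>] by auto
      show "insert A \<Delta>0 \<subseteq> ?a ` insert \<phi> \<Delta> \<union> (\<lambda>q. Box (?a q)) ` RP \<union> (\<lambda>q. Conj \<phi> (Box (Impl \<psi> (?a q)))) ` RC"
        using ConjR.prems(6) AB alpha_boxfree[OF b\<phi>] by auto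
    qed (use ConjR.prems in auto)
    have 2: "CF (insert (\<phi>, \<psi>) \<Theta>) D' (\<Gamma> \<union> G) (\<Delta> \<union> Box ` (insert (Impl \<psi> q) RP \<union> RC))"
    proof (rule ConjR.IH(2))
      show "\<forall>q\<in>insert (Impl \<psi> q) RP. ok q" using ConjR.prems(3,4) okI c(1) by auto
      show "insert B \<Delta>0 \<subseteq> ?a ` \<Delta> \<union> (\<lambda>q. Box (?a q)) ` insert (Impl \<psi> q) RP \<union> (\<lambda>q. Conj \<phi> (Box (Impl \<psi> (?a q)))) ` RC"
        using ConjR.prems(6) AB by auto
    qed (use ConjR.prems in auto)
    have h1: "CF (insert (\<phi>, \<psi>) \<Theta>) D' (\<Gamma> \<union> G) (insert \<phi> (\<Delta> \<union> Box ` (RP \<union> RC)))" using 1 by simp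
    have h2: "CF (insert (\<phi>, \<psi>) \<Theta>) D' (\<Gamma> \<union> G) (insert (Box (Impl \<psi> q)) (\<Delta> \<union> Box ` (RP \<union> RC)))" using 2 by simp
    have "CF (insert (\<phi>, \<psi>) \<Theta>) D' (\<Gamma> \<union> G) (insert (Box q) (\<Delta> \<union> Box ` (RP \<union> RC)))"
      by (rule L_new[OF ct' fixD' _ h1 h2]) simp
    then show ?thesis using c(1) by (simp add: insert_absorb)
  qed
next
  case (DisjL A B \<Gamma>0 \<Delta>0)
  let ?a = "alpha \<phi> \<psi>"
  from DisjL.hyps(1) DisjL.prems(5) have "Disj A B \<in> ?a ` \<Gamma> \<or> (\<exists>c\<in>lc \<Theta> D \<phi> (Disj A B). c \<subseteq> G)" by blast
  then obtain g where g: "g \<in> \<Gamma>" "Disj A B = ?a g" by auto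
  show ?case
  proof (cases g)
    case (Disj g1 g2)
    with g have g': "A = ?a g1" "B = ?a g2" by auto
    have 1: "CF (insert (\<phi>, \<psi>) \<Theta>) D' (insert g1 \<Gamma> \<union> G) (\<Delta> \<union> Box ` (RP \<union> RC))"
      by (rule DisjL.IH(1)) (use DisjL.prems g g' Disj in auto)
    have 2: "CF (insert (\<phi>, \<psi>) \<Theta>) D' (insert g2 \<Gamma> \<union> G) (\<Delta> \<union> Box ` (RP \<union> RC))"
      by (rule DisjL.IH(2)) (use DisjL.prems g g' Disj in auto)
    show ?thesis by (rule CF.DisjL[of g1 g2]) (use 1 2 g Disj in auto)
  next
    case (Box q)
    with g have AB: "A = Conj \<phi> (Box (Impl \<psi> (?a q)))" "B = Box (?a q)" by auto
    have okq: "ok q" using DisjL.prems(1) g Box by fastforce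
    show ?thesis
    proof (rule CF.BoxL[of q])
      show "Box q \<in> \<Gamma> \<union> G" using g Box by auto
    next
      fix S assume S: "finite S" "S \<subseteq> insert (\<phi>, \<psi>) \<Theta>" "D' (snd ` S) {q}"
      show "CF (insert (\<phi>, \<psi>) \<Theta>) D' (\<Gamma> \<union> G \<union> fst ` S) (\<Delta> \<union> Box ` (RP \<union> RC))"
      proof (cases "(\<phi>, \<psi>) \<in> S")
        case True
        define S0 where "S0 = S - {(\<phi>, \<psi>)}"
        have S0: "finite S0" "S0 \<subseteq> \<Theta>" using S unfolding S0_def by auto
        have "snd ` S = insert \<psi> (snd ` S0)" using True unfolding S0_def by force
        then have "D' (insert \<psi> (snd ` S0)) {q}" using S(3) by simp
        then have "D' (snd ` S0) {Impl \<psi> q}" by (rule D_impl_bwd[OF fixD'])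
        then have dd: "D (snd ` S0) {Impl \<psi> (?a q)}" using SCI[OF okq S0] by simp
        have lcA: "insert \<phi> (fst ` S0) \<in> lc \<Theta> D \<phi> A" using AB dd S0 by auto
        have sub: "insert \<phi> (fst ` S0) \<subseteq> G \<union> fst ` S" using True unfolding S0_def by force
        have "CF (insert (\<phi>, \<psi>) \<Theta>) D' (\<Gamma> \<union> (G \<union> fst ` S)) (\<Delta> \<union> Box ` (RP \<union> RC))"
        proof (rule DisjL.IH(1))
          show "\<forall>x\<in>insert A \<Gamma>0. x \<in> ?a ` \<Gamma> \<or> (\<exists>c\<in>lc \<Theta> D \<phi> x. c \<subseteq> G \<union> fst ` S)"
            by (rule lc_extend[OF DisjL.prems(5) lcA sub]) blast
        qed (use DisjL.prems in auto)
        then show ?thesis by (simp add: Un_assoc)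
      next
        case False
        have S1: "S \<subseteq> \<Theta>" using S(2) False by auto
        have dd: "D (snd ` S) {?a q}" using SC[OF okq S(1) S1] S(3) by simp
        have lcB: "fst ` S \<in> lc \<Theta> D \<phi> B" using AB dd S(1) S1 by auto
        have "CF (insert (\<phi>, \<psi>) \<Theta>) D' (\<Gamma> \<union> (G \<union> fst ` S)) (\<Delta> \<union> Box ` (RP \<union> RC))"
        proof (rule DisjL.IH(2))
          show "\<forall>x\<in>insert B \<Gamma>0. x \<in> ?a ` \<Gamma> \<or> (\<exists>c\<in>lc \<Theta> D \<phi> x. c \<subseteq> G \<union> fst ` S)"
            by (rule lc_extend[OF DisjL.prems(5) lcB]) blast+
        qed (use DisjL.prems in auto)
        then show ?thesis by (simp add: Un_assoc)
      qed
    qed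
  qed (use g in auto)
next
  case (DisjR A B \<Delta>0 \<Gamma>0)
  let ?a = "alpha \<phi> \<psi>"
  from DisjR.hyps(1) DisjR.prems(6) obtain d where d: "d \<in> \<Delta>" "Disj A B = ?a d" by auto
  show ?case
  proof (cases d)
    case (Disj d1 d2)
    with d have d': "A = ?a d1" "B = ?a d2" by auto
    have 1: "CF (insert (\<phi>, \<psi>) \<Theta>) D' (\<Gamma> \<union> G) (insert d1 (insert d2 \<Delta>) \<union> Box ` (RP \<union> RC))"
      by (rule DisjR.IH) (use DisjR.prems d d' Disj in auto)
    show ?thesis by (rule CF.DisjR[of d1 d2]) (use 1 d Disj in auto)
  next
    case (Box q)
    with d have AB: "A = Conj \<phi> (Box (Impl \<psi> (?a q)))" "B = Box (?a q)" by auto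
    have okq: "ok q" using DisjR.prems(2) d Box by fastforce
    have "CF (insert (\<phi>, \<psi>) \<Theta>) D' (\<Gamma> \<union> G) (\<Delta> \<union> Box ` (insert q RP \<union> insert q RC))"
      by (rule DisjR.IH) (use DisjR.prems AB okq in auto)
    moreover have "\<Delta> \<union> Box ` (insert q RP \<union> insert q RC) = \<Delta> \<union> Box ` (RP \<union> RC)" using d Box by auto
    ultimately show ?thesis by simp
  qed (use d in auto)
next
  case (ImplL A B \<Gamma>0 \<Delta>0)
  from ImplL.hyps(1) ImplL.prems(5) have "Impl A B \<in> alpha \<phi> \<psi> ` \<Gamma> \<or> (\<exists>c\<in>lc \<Theta> D \<phi> (Impl A B). c \<subseteq> G)" by blast
  then obtain g where g: "g \<in> \<Gamma>" "Impl A B = alpha \<phi> \<psi> g" by auto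
  then obtain g1 g2 where g': "g = Impl g1 g2" "A = alpha \<phi> \<psi> g1" "B = alpha \<phi> \<psi> g2" by (cases g) auto
  have 1: "CF (insert (\<phi>, \<psi>) \<Theta>) D' (\<Gamma> \<union> G) (insert g1 \<Delta> \<union> Box ` (RP \<union> RC))"
    by (rule ImplL.IH(1)) (use ImplL.prems g g' in auto)
  have 2: "CF (insert (\<phi>, \<psi>) \<Theta>) D' (insert g2 \<Gamma> \<union> G) (\<Delta> \<union> Box ` (RP \<union> RC))"
    by (rule ImplL.IH(2)) (use ImplL.prems g g' in auto)
  show ?case by (rule CF.ImplL[of g1 g2]) (use 1 2 g g' in auto)
next
  case (ImplR A B \<Delta>0 \<Gamma>0)
  from ImplR.hyps(1) ImplR.prems(6) obtain d where d: "d \<in> \<Delta>" "Impl A B = alpha \<phi> \<psi> d" by auto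
  then obtain d1 d2 where d': "d = Impl d1 d2" "A = alpha \<phi> \<psi> d1" "B = alpha \<phi> \<psi> d2" by (cases d) auto
  have 1: "CF (insert (\<phi>, \<psi>) \<Theta>) D' (insert d1 \<Gamma> \<union> G) (insert d2 \<Delta> \<union> Box ` (RP \<union> RC))"
    by (rule ImplR.IH) (use ImplR.prems d d' in auto)
  show ?case by (rule CF.ImplR[of d1 d2]) (use 1 d d' in auto)
next
  case (BoxR p \<Delta>0 rs \<Gamma>0)
  let ?a = "alpha \<phi> \<psi>"
  from BoxR.hyps(1) BoxR.prems(6) obtain q where q: "q \<in> RP" "p = ?a q" by auto
  have cb: "boxfree (conjs (map fst rs))" by (rule ct_conjs[OF ct BoxR.hyps(2)])
  have 1: "CF (insert (\<phi>, \<psi>) \<Theta>) D' (\<Gamma> \<union> G) (insert (conjs (map fst rs)) \<Delta> \<union> Box ` (RP \<union> RC))"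
  proof (rule BoxR.IH)
    show "\<forall>x\<in>insert (conjs (map fst rs)) \<Delta>. good ok x" using BoxR.prems(2) boxfree_good[OF cb] by auto
    show "insert (conjs (map fst rs)) \<Delta>0 \<subseteq> ?a ` insert (conjs (map fst rs)) \<Delta> \<union> (\<lambda>q. Box (?a q)) ` RP \<union> (\<lambda>q. Conj \<phi> (Box (Impl \<psi> (?a q)))) ` RC"
      using BoxR.prems(6) alpha_boxfree[OF cb] by auto
  qed (use BoxR.prems in auto)
  have side: "D' (set (map snd rs)) {q}"
    using SC[of q "set rs"] BoxR.prems(3) q BoxR.hyps(2,3) by auto
  show ?case by (rule CF.BoxR[where Th="insert (\<phi>, \<psi>) \<Theta>" and Side=D' and p=q and rs=rs, OF _ _ side]) (use 1 q BoxR.hyps(2) in auto)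
next
  case (BoxL p \<Gamma>0 \<Delta>0)
  from BoxL.hyps(1) BoxL.prems(5) have "Box p \<in> alpha \<phi> \<psi> ` \<Gamma> \<or> (\<exists>c\<in>lc \<Theta> D \<phi> (Box p). c \<subseteq> G)" by blast
  then obtain c where c: "c \<in> lc \<Theta> D \<phi> (Box p)" "c \<subseteq> G" by auto
  then obtain S where S: "c = fst ` S" "finite S" "S \<subseteq> \<Theta>" "D (snd ` S) {p}" by auto
  have fb: "\<forall>x\<in>fst ` S. boxfree x" using S(3) ct ct_boxfree by fastforce
  have "CF (insert (\<phi>, \<psi>) \<Theta>) D' ((\<Gamma> \<union> fst ` S) \<union> G) (\<Delta> \<union> Box ` (RP \<union> RC))"
  proof (rule BoxL.IH[OF S(2,3,4)])
    show "\<forall>x\<in>\<Gamma> \<union> fst ` S. good ok x" using BoxL.prems(1) fb boxfree_good by blast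
    show "\<forall>x\<in>\<Gamma>0 \<union> fst ` S. x \<in> alpha \<phi> \<psi> ` (\<Gamma> \<union> fst ` S) \<or> (\<exists>c\<in>lc \<Theta> D \<phi> x. c \<subseteq> G)"
    proof
      fix x assume "x \<in> \<Gamma>0 \<union> fst ` S"
      then show "x \<in> alpha \<phi> \<psi> ` (\<Gamma> \<union> fst ` S) \<or> (\<exists>c\<in>lc \<Theta> D \<phi> x. c \<subseteq> G)"
      proof
        assume "x \<in> \<Gamma>0"
        then have "x \<in> alpha \<phi> \<psi> ` \<Gamma> \<or> (\<exists>c\<in>lc \<Theta> D \<phi> x. c \<subseteq> G)" using BoxL.prems(5) by blast
        then show ?thesis by blast
      next
        assume x: "x \<in> fst ` S"
        then have "alpha \<phi> \<psi> x = x" using fb alpha_boxfree by blast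
        then have "x \<in> alpha \<phi> \<psi> ` (\<Gamma> \<union> fst ` S)" using x by (metis UnCI image_eqI)
        then show ?thesis by blast
      qed
    qed
  qed (use BoxL.prems in auto)
  then show ?case using S(1) c(2) by (simp add: Un_absorb2 Un_assoc Un_commute[of "fst ` S"] sup.absorb2)
qed

end

lemma good_True: "good (\<lambda>_. True) x"
  by (induction x) auto

lemma alpha_boxfree_set: "\<forall>x\<in>B. boxfree x \<Longrightarrow> alpha \<phi> \<psi> ` B = B"
  using alpha_boxfree by (metis (no_types, lifting) image_cong image_ident)

lemma SC_all:
  assumes ct: "causal_theory \<Theta>" and b\<phi>: "boxfree \<phi>" and b\<psi>: "boxfree \<psi>"
    and fixD: "is_derivability \<Theta> D" and fixD': "is_derivability (insert (\<phi>, \<psi>) \<Theta>) D'"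
  shows "finite S \<Longrightarrow> S \<subseteq> \<Theta> \<Longrightarrow> D' (snd ` S) {q} = D (snd ` S) {alpha \<phi> \<psi> q}"
proof (induction q arbitrary: S rule: measure_induct_rule[where f=dp])
  case (less q)
  define ok where "ok = (\<lambda>x::'a fm. dp x < dp q)"
  have SCh: "\<And>x S. ok x \<Longrightarrow> finite S \<Longrightarrow> S \<subseteq> \<Theta> \<Longrightarrow> D' (snd ` S) {x} = D (snd ` S) {alpha \<phi> \<psi> x}"
    using less.IH unfolding ok_def by blast
  have okI: "\<And>x. ok x \<Longrightarrow> ok (Impl \<psi> x)" unfolding ok_def using boxfree_dp[OF b\<psi>] by simp
  have ct': "causal_theory (insert (\<phi>, \<psi>) \<Theta>)" by (rule ct_insert[OF ct b\<phi> b\<psi>])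
  have bB: "\<forall>x\<in>snd ` S. boxfree x" using less.prems(2) ct ct_boxfree by fastforce
  have aB: "alpha \<phi> \<psi> ` (snd ` S) = snd ` S" by (rule alpha_boxfree_set[OF bB])
  show ?case
  proof
    assume "D' (snd ` S) {q}"
    then have "calc (insert (\<phi>, \<psi>) \<Theta>) D' (snd ` S) {q}" using Dcalc[OF fixD'] by metis
    then have c: "CF (insert (\<phi>, \<psi>) \<Theta>) D' (snd ` S) {q}" by (rule calc_CF[OF ct'])
    have "CF \<Theta> D (alpha \<phi> \<psi> ` snd ` S) (alpha \<phi> \<psi> ` {q})"
    proof (rule fwd[where ok=ok, OF ct b\<phi> b\<psi> fixD fixD' SCh okI c])
      show "\<forall>x\<in>snd ` S. good ok x" using bB boxfree_good by blast
      show "\<forall>x\<in>{q}. good ok x" unfolding ok_def using good_dp[of q "dp q"] by simp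
    qed
    then have "calc \<Theta> D (snd ` S) {alpha \<phi> \<psi> q}" using aB CF_calc by fastforce
    then show "D (snd ` S) {alpha \<phi> \<psi> q}" using Dcalc[OF fixD] by metis
  next
    assume "D (snd ` S) {alpha \<phi> \<psi> q}"
    then have "calc \<Theta> D (snd ` S) {alpha \<phi> \<psi> q}" using Dcalc[OF fixD] by metis
    then have c: "CF \<Theta> D (snd ` S) {alpha \<phi> \<psi> q}" by (rule calc_CF[OF ct])
    have "CF (insert (\<phi>, \<psi>) \<Theta>) D' (snd ` S \<union> {}) ({q} \<union> Box ` ({} \<union> {}))"
    proof (rule back_tr[where ok=ok, OF ct b\<phi> b\<psi> fixD fixD' SCh okI c])
      show "\<forall>x\<in>snd ` S. good ok x" using bB boxfree_good by blast
      show "\<forall>x\<in>{q}. good ok x" unfolding ok_def using good_dp[of q "dp q"] by simp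
      show "\<forall>x\<in>snd ` S. x \<in> alpha \<phi> \<psi> ` snd ` S \<or> (\<exists>c\<in>lc \<Theta> D \<phi> x. c \<subseteq> {})" using aB by blast
    qed auto
    then have "calc (insert (\<phi>, \<psi>) \<Theta>) D' (snd ` S) {q}" using CF_calc by fastforce
    then show "D' (snd ` S) {q}" using Dcalc[OF fixD'] by metis
  qed
qed

theorem mainTheorem18:
  fixes \<Theta> :: "'a causal_theory" and \<phi> \<psi> :: "'a fm"
    and D D' :: "'a fm set \<Rightarrow> 'a fm set \<Rightarrow> bool"
    and \<Gamma> \<Delta> :: "'a fm set"
  assumes "causal_theory \<Theta>" and "boxfree \<phi>" and "boxfree \<psi>"
    and "is_derivability \<Theta> D"
    and "is_derivability (insert (\<phi>, \<psi>) \<Theta>) D'"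
  shows "D' \<Gamma> \<Delta> \<longleftrightarrow> D (alpha \<phi> \<psi> ` \<Gamma>) (alpha \<phi> \<psi> ` \<Delta>)"
proof -
  note ct = assms(1) and b\<phi> = assms(2) and b\<psi> = assms(3) and fixD = assms(4) and fixD' = assms(5)
  have ct': "causal_theory (insert (\<phi>, \<psi>) \<Theta>)" by (rule ct_insert[OF ct b\<phi> b\<psi>])
  have SCh: "\<And>x S. (\<lambda>_. True) x \<Longrightarrow> finite S \<Longrightarrow> S \<subseteq> \<Theta> \<Longrightarrow> D' (snd ` S) {x} = D (snd ` S) {alpha \<phi> \<psi> x}"
    using SC_all[OF ct b\<phi> b\<psi> fixD fixD'] by blast
  have okI: "\<And>x. (\<lambda>_. True) x \<Longrightarrow> (\<lambda>_. True) (Impl \<psi> x)" by simp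
  show ?thesis
  proof
    assume "D' \<Gamma> \<Delta>"
    then have "calc (insert (\<phi>, \<psi>) \<Theta>) D' \<Gamma> \<Delta>" using Dcalc[OF fixD'] by metis
    then have c: "CF (insert (\<phi>, \<psi>) \<Theta>) D' \<Gamma> \<Delta>" by (rule calc_CF[OF ct'])
    have "CF \<Theta> D (alpha \<phi> \<psi> ` \<Gamma>) (alpha \<phi> \<psi> ` \<Delta>)"
      by (rule fwd[where ok="\<lambda>_. True", OF ct b\<phi> b\<psi> fixD fixD' SCh okI c]) (simp_all add: good_True)
    then have "calc \<Theta> D (alpha \<phi> \<psi> ` \<Gamma>) (alpha \<phi> \<psi> ` \<Delta>)" by (rule CF_calc)
    then show "D (alpha \<phi> \<psi> ` \<Gamma>) (alpha \<phi> \<psi> ` \<Delta>)" using Dcalc[OF fixD] by metis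
  next
    assume "D (alpha \<phi> \<psi> ` \<Gamma>) (alpha \<phi> \<psi> ` \<Delta>)"
    then have "calc \<Theta> D (alpha \<phi> \<psi> ` \<Gamma>) (alpha \<phi> \<psi> ` \<Delta>)" using Dcalc[OF fixD] by metis
    then have c: "CF \<Theta> D (alpha \<phi> \<psi> ` \<Gamma>) (alpha \<phi> \<psi> ` \<Delta>)" by (rule calc_CF[OF ct])
    have "CF (insert (\<phi>, \<psi>) \<Theta>) D' (\<Gamma> \<union> {}) (\<Delta> \<union> Box ` ({} \<union> {}))"
      by (rule back_tr[where ok="\<lambda>_. True", OF ct b\<phi> b\<psi> fixD fixD' SCh okI c]) (auto simp: good_True)
    then have "calc (insert (\<phi>, \<psi>) \<Theta>) D' \<Gamma> \<Delta>" using CF_calc by fastforce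
    then show "D' \<Gamma> \<Delta>" using Dcalc[OF fixD'] by metis
  qed
qed

end
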